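(* Let $G$ be a finite group, $p\neq q$ odd primes, $P$ a $p$-subgroup and $Q_1\le Q$ $q$-subgroups of $G$. Assume $P$ normalizes $Q_1$ and $Q$ normalizes $Q_1P$. Then $QP$ is a subgroup of $G$ with $Q$ a Sylow $q$-subgroup and $P$ a Sylow $p$-subgroup of $QP$, and $Q_1P\trianglelefteq QP$, $Q_1\trianglelefteq QP$. Moreover $Q=[Q_1,P]\,N_Q(P)$, where $[Q_1,P]\trianglelefteq QP$ and $[Q_1,P]\cap N_Q(P)=C_{[Q_1,P]}(P)\le\Phi([Q_1,P])$.
   Context: $\Phi(X)$ is the Frattini subgroup of $X$; $[Q_1,P]$ is the commutator subgroup. *)

theory Defs
  imports "HOL-Algebra.Algebra"
begin

definition commutator_subgroup :: "('a, 'b) monoid_scheme \<Rightarrow> 'a set \<Rightarrow> 'a set \<Rightarrow> 'a set" where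
  "commutator_subgroup G A B =
     generate G {a \<otimes>\<^bsub>G\<^esub> b \<otimes>\<^bsub>G\<^esub> inv\<^bsub>G\<^esub> a \<otimes>\<^bsub>G\<^esub> inv\<^bsub>G\<^esub> b | a b. a \<in> A \<and> b \<in> B}"

definition centralizer_in :: "('a, 'b) monoid_scheme \<Rightarrow> 'a set \<Rightarrow> 'a set \<Rightarrow> 'a set" where
  "centralizer_in G H S = {h \<in> H. \<forall>x \<in> S. h \<otimes>\<^bsub>G\<^esub> x = x \<otimes>\<^bsub>G\<^esub> h}"

definition maximal_subgroup_of :: "('a, 'b) monoid_scheme \<Rightarrow> 'a set \<Rightarrow> 'a set \<Rightarrow> bool" where
  "maximal_subgroup_of G M H \<longleftrightarrow> subgroup M G \<and> M \<subset> H \<and>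
     (\<forall>K. subgroup K G \<and> M \<subseteq> K \<and> K \<subseteq> H \<longrightarrow> K = M \<or> K = H)"

text \<open>Frattini subgroup of H: intersection of all maximal subgroups of H (H itself if none).\<close>
definition frattini :: "('a, 'b) monoid_scheme \<Rightarrow> 'a set \<Rightarrow> 'a set" where
  "frattini G H = H \<inter> \<Inter> {M. maximal_subgroup_of G M H}"

definition p_subgroup :: "('a, 'b) monoid_scheme \<Rightarrow> nat \<Rightarrow> 'a set \<Rightarrow> bool" where
  "p_subgroup G p H \<longleftrightarrow> subgroup H G \<and> (\<exists>n. card H = p ^ n)"

definition sylow_subgroup :: "('a, 'b) monoid_scheme \<Rightarrow> nat \<Rightarrow> 'a set \<Rightarrow> bool" where
  "sylow_subgroup G p H \<longleftrightarrow> subgroup H G \<and> card H = p ^ multiplicity p (order G)"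

end

theory Submission
  imports Defs
begin


lemma fixed_point_mod:
  fixes H (structure)
  assumes grp: "group H" and fin: "finite (carrier H)" and crd: "card (carrier H) = p ^ n"
    and pr: "Factorial_Ring.prime p"
    and S: "finite S"
    and cl: "\<And>a x. a \<in> carrier H \<Longrightarrow> x \<in> S \<Longrightarrow> f a x \<in> S"
    and one: "\<And>x. x \<in> S \<Longrightarrow> f \<one> x = x"
    and mult: "\<And>a b x. a \<in> carrier H \<Longrightarrow> b \<in> carrier H \<Longrightarrow> x \<in> S \<Longrightarrow> f (a \<otimes> b) x = f a (f b x)"
  shows "card S mod p = card {x\<in>S. \<forall>a\<in>carrier H. f a x = x} mod p"
proof -
  interpret H: group H by fact
  define \<phi> where "\<phi> = (\<lambda>a. \<lambda>x\<in>S. f a x)"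
  have bij: "\<phi> a \<in> Bij S" if a: "a \<in> carrier H" for a
  proof -
    have inv: "f (inv a) (f a x) = x" if "x \<in> S" for x
      using mult[of "inv a" a x] a that one by simp
    have inv2: "f a (f (inv a) x) = x" if "x \<in> S" for x
      using mult[of a "inv a" x] a that one by simp
    have "bij_betw (f a) S S"
      by (rule bij_betwI[where g="f (inv a)"]) (use a cl inv inv2 in auto)
    then show ?thesis unfolding Bij_def \<phi>_def
      by (auto simp: bij_betw_def inj_on_def)
  qed
  have hom: "group_hom H (BijGroup S) \<phi>"
  proof (rule group_hom.intro[OF grp group_BijGroup], unfold group_hom_axioms_def, rule homI)
    show "\<phi> a \<in> carrier (BijGroup S)" if "a \<in> carrier H" for a
      using bij[OF that] by (simp add: BijGroup_def)
    show "\<phi> (a \<otimes> b) = \<phi> a \<otimes>\<^bsub>BijGroup S\<^esub> \<phi> b" if "a \<in> carrier H" "b \<in> carrier H" for a b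
      using that bij by (auto simp: BijGroup_def \<phi>_def compose_def mult cl fun_eq_iff)
  qed
  interpret A: group_action H S \<phi> by (unfold group_action_def) (rule hom)
  have orb: "orbit H \<phi> x = {f a x | a. a \<in> carrier H}" if "x \<in> S" for x
    using that by (auto simp: orbit_def \<phi>_def)
  define Os where "Os = orbits H S \<phi>"
  have finOs: "finite Os" unfolding Os_def orbits_def using S by auto
  have cX: "card S = (\<Sum>Ob\<in>Os. card Ob)"
  proof -
    have "(\<Sum>Ob\<in>Os. \<Sum>x\<in>Ob. (1::nat)) = (\<Sum>x\<in>S. 1)"
      unfolding Os_def by (rule A.disjoint_sum[OF S])
    then show ?thesis by simp
  qed
  have odvd: "card Ob dvd p ^ n" if Ob: "Ob \<in> Os" for Ob
  proof -
    obtain x where x: "x \<in> S" "Ob = orbit H \<phi> x" using Ob unfolding Os_def orbits_def by auto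
    show ?thesis using A.orbit_stabilizer_theorem[OF x(1)] crd x(2) unfolding order_def
      by (metis dvd_triv_left)
  qed
  define Os1 where "Os1 = {Ob\<in>Os. card Ob = 1}"
  have s: "(\<Sum>Ob\<in>Os. card Ob) = (\<Sum>Ob\<in>Os1. card Ob) + (\<Sum>Ob\<in>Os - Os1. card Ob)"
    by (metis Os1_def finOs mem_Collect_eq subsetI sum.subset_diff add.commute)
  have d: "p dvd (\<Sum>Ob\<in>Os - Os1. card Ob)"
  proof (rule dvd_sum)
    fix Ob assume "Ob \<in> Os - Os1"
    then have "card Ob dvd p ^ n" "card Ob \<noteq> 1" using odvd Os1_def by auto
    then obtain k where "card Ob = p ^ k" 
      using pr divides_primepow_nat by blast
    with \<open>card Ob \<noteq> 1\<close> have "k \<noteq> 0" by auto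
    then show "p dvd card Ob" using \<open>card Ob = p ^ k\<close> by (simp add: dvd_power)
  qed
  have s1: "(\<Sum>Ob\<in>Os1. card Ob) = card Os1" unfolding Os1_def by simp
  define Fx where "Fx = {x\<in>S. \<forall>a\<in>carrier H. f a x = x}"
  have "Os1 = (\<lambda>x. {x}) ` Fx"
  proof
    show "Os1 \<subseteq> (\<lambda>x. {x}) ` Fx"
    proof
      fix Ob assume Ob: "Ob \<in> Os1"
      obtain x where x: "x \<in> S" "Ob = orbit H \<phi> x" using Ob unfolding Os1_def Os_def orbits_def by auto
      have "x \<in> Ob" using A.orbit_refl[OF x(1)] x(2) by simp
      have "card Ob = 1" using Ob unfolding Os1_def by simp
      then obtain y where "Ob = {y}" by (rule card_1_singletonE)
      with \<open>x \<in> Ob\<close> have Ox: "Ob = {x}" by simp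
      have "\<forall>a\<in>carrier H. f a x = x" using Ox x orb by auto
      then show "Ob \<in> (\<lambda>x. {x}) ` Fx" using Ox x Fx_def by auto
    qed
    show "(\<lambda>x. {x}) ` Fx \<subseteq> Os1"
    proof
      fix Ob assume "Ob \<in> (\<lambda>x. {x}) ` Fx"
      then obtain x where x: "x \<in> Fx" "Ob = {x}" by auto
      have xS: "x \<in> S" and fx: "\<forall>a\<in>carrier H. f a x = x" using x unfolding Fx_def by auto
      have "orbit H \<phi> x = {f a x | a. a \<in> carrier H}" using orb[OF xS] .
      also have "\<dots> = {x}"
      proof
        show "{f a x | a. a \<in> carrier H} \<subseteq> {x}" using fx by auto
        show "{x} \<subseteq> {f a x | a. a \<in> carrier H}" using one[OF xS] H.one_closed by force
      qed
      finally have "orbit H \<phi> x = {x}" .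
      then show "Ob \<in> Os1" using x unfolding Os1_def Os_def orbits_def Fx_def by auto
    qed
  qed
  then have "card Os1 = card Fx" by (simp add: card_image)
  then show ?thesis using cX s d s1 Fx_def
    by (metis mod_add_right_eq dvd_imp_mod_0 add.right_neutral)
qed


context group begin

lemma cancel1 [simp]: "x \<in> carrier G \<Longrightarrow> y \<in> carrier G \<Longrightarrow> x \<otimes> (inv x \<otimes> y) = y"
proof -
  assume a: "x \<in> carrier G" "y \<in> carrier G"
  have "x \<otimes> (inv x \<otimes> y) = (x \<otimes> inv x) \<otimes> y" using a by (simp only: m_assoc inv_closed)
  also have "\<dots> = y" using a by simp
  finally show ?thesis .
qed
lemma cancel2 [simp]: "x \<in> carrier G \<Longrightarrow> y \<in> carrier G \<Longrightarrow> inv x \<otimes> (x \<otimes> y) = y"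
proof -
  assume a: "x \<in> carrier G" "y \<in> carrier G"
  have "inv x \<otimes> (x \<otimes> y) = (inv x \<otimes> x) \<otimes> y" using a by (simp only: m_assoc inv_closed)
  also have "\<dots> = y" using a by simp
  finally show ?thesis .
qed

lemma conj_image_eq: "H \<subseteq> carrier G \<Longrightarrow> g \<in> carrier G \<Longrightarrow> g <# H #> inv g = (\<lambda>h. g \<otimes> h \<otimes> inv g) ` H"
  unfolding l_coset_def r_coset_def by auto

lemma norm_iff:
  assumes fin: "finite (carrier G)" and H: "subgroup H G"
  shows "g \<in> normalizer G H \<longleftrightarrow> g \<in> carrier G \<and> (\<forall>h\<in>H. g \<otimes> h \<otimes> inv g \<in> H)"
proof -
  have HG: "H \<subseteq> carrier G" using H subgroup.subset by blast
  have "g \<in> normalizer G H \<longleftrightarrow> g \<in> carrier G \<and> g <# H #> inv g = H"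
    unfolding normalizer_def stabilizer_def using HG by auto
  also have "\<dots> \<longleftrightarrow> g \<in> carrier G \<and> (\<forall>h\<in>H. g \<otimes> h \<otimes> inv g \<in> H)"
  proof (cases "g \<in> carrier G")
    case True
    have inj: "inj_on (\<lambda>h. g \<otimes> h \<otimes> inv g) H"
    proof (rule inj_onI)
      fix x y assume xy: "x \<in> H" "y \<in> H" "g \<otimes> x \<otimes> inv g = g \<otimes> y \<otimes> inv g"
      then have "x \<in> carrier G" "y \<in> carrier G" using HG by auto
      then show "x = y" using xy(3) True by (simp add: m_assoc)
    qed
    have finH: "finite H" using fin HG finite_subset by blast
    have "(\<lambda>h. g \<otimes> h \<otimes> inv g) ` H = H \<longleftrightarrow> (\<forall>h\<in>H. g \<otimes> h \<otimes> inv g \<in> H)"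
    proof
      assume "\<forall>h\<in>H. g \<otimes> h \<otimes> inv g \<in> H"
      then have sub: "(\<lambda>h. g \<otimes> h \<otimes> inv g) ` H \<subseteq> H" by auto
      have "card ((\<lambda>h. g \<otimes> h \<otimes> inv g) ` H) = card H" using card_image[OF inj] .
      then show "(\<lambda>h. g \<otimes> h \<otimes> inv g) ` H = H" using card_subset_eq[OF finH sub] by simp
    qed auto
    then show ?thesis using conj_image_eq[OF HG True] True by simp
  qed simp
  finally show ?thesis .
qed

lemma norm_I:
  assumes "finite (carrier G)" "subgroup H G" "g \<in> carrier G" "\<And>h. h \<in> H \<Longrightarrow> g \<otimes> h \<otimes> inv g \<in> H"
  shows "g \<in> normalizer G H"
  using norm_iff[OF assms(1,2)] assms(3,4) by blast

lemma norm_D: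
  assumes "finite (carrier G)" "subgroup H G" "g \<in> normalizer G H" "h \<in> H"
  shows "g \<otimes> h \<otimes> inv g \<in> H"
  using norm_iff[OF assms(1,2)] assms(3,4) by blast

lemma norm_sub: "subgroup H G \<Longrightarrow> subgroup (normalizer G H) G"
  by (rule normalizer_imp_subgroup) (rule subgroup.subset)

lemma norm_carrier: "subgroup H G \<Longrightarrow> g \<in> normalizer G H \<Longrightarrow> g \<in> carrier G"
  by (rule subgroup.mem_carrier[OF norm_sub])

lemma norm_D':
  assumes "finite (carrier G)" "subgroup H G" "g \<in> normalizer G H" "h \<in> H"
  shows "inv g \<otimes> h \<otimes> g \<in> H"
proof -
  have "inv g \<in> normalizer G H" by (rule subgroup.m_inv_closed[OF norm_sub[OF assms(2)] assms(3)])
  then have "inv g \<otimes> h \<otimes> inv (inv g) \<in> H" by (rule norm_D[OF assms(1,2) _ assms(4)])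
  then show ?thesis using norm_carrier[OF assms(2,3)] by simp
qed

lemma self_norm: 
  assumes fin: "finite (carrier G)" and H: "subgroup H G" shows "H \<subseteq> normalizer G H"
proof
  fix g assume g: "g \<in> H"
  show "g \<in> normalizer G H"
  proof (rule norm_I[OF fin H])
    show "g \<in> carrier G" by (rule subgroup.mem_carrier[OF H g])
    fix h assume h: "h \<in> H"
    show "g \<otimes> h \<otimes> inv g \<in> H"
      by (rule subgroup.m_closed[OF H subgroup.m_closed[OF H g h] subgroup.m_inv_closed[OF H g]])
  qed
qed

lemma mult_norm_comm:
  assumes fin: "finite (carrier G)" and H: "subgroup H G" and K: "subgroup K G" and KN: "K \<subseteq> normalizer G H"
  shows "H <#> K = K <#> H"
proof
  have HG: "H \<subseteq> carrier G" and KG: "K \<subseteq> carrier G" using H K subgroup.subset by auto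
  show "H <#> K \<subseteq> K <#> H"
  proof
    fix x assume "x \<in> H <#> K"
    then obtain h k where hk: "h \<in> H" "k \<in> K" "x = h \<otimes> k" unfolding set_mult_def by auto
    have c: "inv k \<otimes> h \<otimes> k \<in> H" using norm_D'[OF fin H _ hk(1)] KN hk(2) by auto
    have "h \<in> carrier G" "k \<in> carrier G" using hk HG KG by auto
    then have "x = k \<otimes> (inv k \<otimes> h \<otimes> k)" using hk by (simp add: m_assoc)
    then show "x \<in> K <#> H" using c hk(2) unfolding set_mult_def by auto
  qed
next
  have HG: "H \<subseteq> carrier G" and KG: "K \<subseteq> carrier G" using H K subgroup.subset by auto
  show "K <#> H \<subseteq> H <#> K"
  proof
    fix x assume "x \<in> K <#> H"
    then obtain h k where hk: "h \<in> H" "k \<in> K" "x = k \<otimes> h" unfolding set_mult_def by auto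
    have c: "k \<otimes> h \<otimes> inv k \<in> H" using norm_D[OF fin H _ hk(1)] KN hk(2) by auto
    have "h \<in> carrier G" "k \<in> carrier G" using hk HG KG by auto
    then have "x = (k \<otimes> h \<otimes> inv k) \<otimes> k" using hk by (simp add: m_assoc)
    then show "x \<in> H <#> K" using c hk(2) unfolding set_mult_def by auto
  qed
qed

lemma set_multI: "h \<in> H \<Longrightarrow> k \<in> K \<Longrightarrow> h \<otimes> k \<in> H <#> K"
  unfolding set_mult_def by blast

lemma set_multE: "x \<in> H <#> K \<Longrightarrow> (\<And>h k. h \<in> H \<Longrightarrow> k \<in> K \<Longrightarrow> x = h \<otimes> k \<Longrightarrow> P) \<Longrightarrow> P"
  unfolding set_mult_def by blast

lemma mult_norm_subgroup':
  assumes fin: "finite (carrier G)" and H: "subgroup H G" and K: "subgroup K G" and KN: "K \<subseteq> normalizer G H"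
  shows "subgroup (H <#> K) G"
proof -
  have HG: "H \<subseteq> carrier G" and KG: "K \<subseteq> carrier G" using H K subgroup.subset by auto
  show ?thesis
  proof
    show "H <#> K \<subseteq> carrier G" using setmult_subset_G HG KG by blast
    have "\<one> \<otimes> \<one> \<in> H <#> K" by (rule set_multI[OF subgroup.one_closed[OF H] subgroup.one_closed[OF K]])
    then show "\<one> \<in> H <#> K" by simp
  next
    fix x y assume x: "x \<in> H <#> K" and y: "y \<in> H <#> K"
    obtain h1 k1 where 1: "h1 \<in> H" "k1 \<in> K" "x = h1 \<otimes> k1" using x by (rule set_multE)
    obtain h2 k2 where 2: "h2 \<in> H" "k2 \<in> K" "y = h2 \<otimes> k2" using y by (rule set_multE)
    have cc: "h1 \<in> carrier G" "h2 \<in> carrier G" "k1 \<in> carrier G" "k2 \<in> carrier G" using 1 2 HG KG by auto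
    have c: "k1 \<otimes> h2 \<otimes> inv k1 \<in> H" using norm_D[OF fin H _ 2(1)] KN 1(2) by auto
    have e: "x \<otimes> y = (h1 \<otimes> (k1 \<otimes> h2 \<otimes> inv k1)) \<otimes> (k1 \<otimes> k2)"
      using 1(3) 2(3) cc by (simp add: m_assoc)
    have "h1 \<otimes> (k1 \<otimes> h2 \<otimes> inv k1) \<in> H" by (rule subgroup.m_closed[OF H 1(1) c])
    moreover have "k1 \<otimes> k2 \<in> K" by (rule subgroup.m_closed[OF K 1(2) 2(2)])
    ultimately show "x \<otimes> y \<in> H <#> K" unfolding e by (rule set_multI)
  next
    fix x assume x: "x \<in> H <#> K"
    obtain h k where 1: "h \<in> H" "k \<in> K" "x = h \<otimes> k" using x by (rule set_multE)
    have cc: "h \<in> carrier G" "k \<in> carrier G" using 1 HG KG by auto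
    have ik: "inv k \<in> K" by (rule subgroup.m_inv_closed[OF K 1(2)])
    have ih: "inv h \<in> H" by (rule subgroup.m_inv_closed[OF H 1(1)])
    have c: "inv k \<otimes> inv h \<otimes> inv (inv k) \<in> H" using norm_D[OF fin H _ ih] KN ik by (simp add: subsetD)
    have e: "inv x = (inv k \<otimes> inv h \<otimes> inv (inv k)) \<otimes> inv k"
      using 1(3) cc by (simp add: m_assoc inv_mult_group)
    show "inv x \<in> H <#> K" unfolding e using c ik by (rule set_multI)
  qed
qed

lemma normal_sub:
  assumes fin: "finite (carrier G)" and J: "subgroup J G" and N: "subgroup N G" and NJ: "N \<subseteq> J"
    and JN: "J \<subseteq> normalizer G N"
  shows "N \<lhd> G\<lparr>carrier := J\<rparr>"
proof -
  interpret GJ: group "G\<lparr>carrier := J\<rparr>" using subgroup_imp_group[OF J] .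
  show ?thesis
  proof (rule GJ.normal_invI)
    show "subgroup N (G\<lparr>carrier := J\<rparr>)" using subgroup_incl[OF N J NJ] .
    fix x h assume "x \<in> carrier (G\<lparr>carrier := J\<rparr>)" "h \<in> N"
    then have x: "x \<in> J" and h: "h \<in> N" by auto
    have "inv\<^bsub>G\<lparr>carrier := J\<rparr>\<^esub> x = inv x" using x J subgroup.subset m_inv_consistent by blast
    then show "x \<otimes>\<^bsub>G\<lparr>carrier := J\<rparr>\<^esub> h \<otimes>\<^bsub>G\<lparr>carrier := J\<rparr>\<^esub> inv\<^bsub>G\<lparr>carrier := J\<rparr>\<^esub> x \<in> N"
      using norm_D[OF fin N _ h] JN x by auto
  qed
qed

lemma sub_card_dvd:
  assumes fin: "finite (carrier G)" and K: "subgroup K G" and H: "subgroup H G" and KH: "K \<subseteq> H"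
  shows "card K dvd card H"
proof -
  interpret GH: group "G\<lparr>carrier := H\<rparr>" using subgroup_imp_group[OF H] .
  from GH.lagrange[OF subgroup_incl[OF K H KH]]
  have "card (rcosets\<^bsub>G\<lparr>carrier := H\<rparr>\<^esub> K) * card K = card H" by (simp add: order_def)
  then show ?thesis by (metis dvd_triv_right)
qed

lemma sub_pgroup:
  assumes fin: "finite (carrier G)" and K: "subgroup K G" and H: "subgroup H G" and KH: "K \<subseteq> H"
    and p: "Factorial_Ring.prime (p::nat)" and c: "card H = p ^ n"
  shows "\<exists>m. card K = p ^ m"
  using sub_card_dvd[OF fin K H KH] c divides_primepow_nat[OF p] by auto

lemma card_mult_disjoint:
  assumes fin: "finite (carrier G)" and H: "subgroup H G" and K: "subgroup K G" and I: "H \<inter> K = {\<one>}"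
  shows "card (H <#> K) = card H * card K"
proof -
  have HG: "H \<subseteq> carrier G" and KG: "K \<subseteq> carrier G" using H K subgroup.subset by auto
  have e: "H <#> K = (\<lambda>(h,k). h \<otimes> k) ` (H \<times> K)" unfolding set_mult_def by auto
  have inj: "inj_on (\<lambda>(h,k). h \<otimes> k) (H \<times> K)"
  proof (rule inj_onI, clarify)
    fix h1 k1 h2 k2 assume a: "h1 \<in> H" "k1 \<in> K" "h2 \<in> H" "k2 \<in> K" "h1 \<otimes> k1 = h2 \<otimes> k2"
    have c: "h1 \<in> carrier G" "h2 \<in> carrier G" "k1 \<in> carrier G" "k2 \<in> carrier G" using a HG KG by auto
    have "inv h2 \<otimes> h1 = k2 \<otimes> inv k1"
    proof -
      have "inv h2 \<otimes> h1 = inv h2 \<otimes> (h1 \<otimes> k1) \<otimes> inv k1" using c by (simp add: m_assoc)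
      also have "\<dots> = inv h2 \<otimes> (h2 \<otimes> k2) \<otimes> inv k1" using a by simp
      also have "\<dots> = k2 \<otimes> inv k1" using c by (simp add: m_assoc)
      finally show ?thesis .
    qed
    moreover have "inv h2 \<otimes> h1 \<in> H" by (rule subgroup.m_closed[OF H subgroup.m_inv_closed[OF H a(3)] a(1)])
    moreover have "k2 \<otimes> inv k1 \<in> K" by (rule subgroup.m_closed[OF K a(4) subgroup.m_inv_closed[OF K a(2)]])
    ultimately have "inv h2 \<otimes> h1 = \<one>" "k2 \<otimes> inv k1 = \<one>" using I by auto
    moreover have "h1 = h2 \<otimes> (inv h2 \<otimes> h1)" using c by simp
    moreover have "k2 = (k2 \<otimes> inv k1) \<otimes> k1" using c by (simp add: m_assoc)
    ultimately show "h1 = h2 \<and> k1 = k2" using c by simp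
  qed
  have "finite H" "finite K" using fin HG KG finite_subset by auto
  then show ?thesis unfolding e using card_image[OF inj] card_cartesian_product by simp
qed

end

lemma prime_pow_eq:
  assumes "Factorial_Ring.prime (p::nat)" "Factorial_Ring.prime q" "p \<noteq> q" "p ^ i = q ^ j"
  shows "i = 0"
proof (rule ccontr)
  assume "i \<noteq> 0"
  then have "p dvd p ^ i" by (cases i) auto
  then have "p dvd q ^ j" using assms(4) by simp
  then have "p dvd q" using assms(1) prime_dvd_power by blast
  then show False using assms primes_dvd_imp_eq by blast
qed

context group begin
lemma coprime_inter:
  assumes fin: "finite (carrier G)" and P: "subgroup P G" and Q: "subgroup Q G"
    and p: "Factorial_Ring.prime (p::nat)" and q: "Factorial_Ring.prime q" and pq: "p \<noteq> q"
    and cP: "card P = p ^ a" and cQ: "card Q = q ^ b"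
  shows "P \<inter> Q = {\<one>}"
proof -
  have I: "subgroup (P \<inter> Q) G" using P Q subgroups_Inter_pair by blast
  obtain i where i: "card (P \<inter> Q) = p ^ i" using sub_pgroup[OF fin I P _ p cP] by auto
  obtain j where j: "card (P \<inter> Q) = q ^ j" using sub_pgroup[OF fin I Q _ q cQ] by auto
  have "p ^ i = q ^ j" using i j by simp
  then have "i = 0" using prime_pow_eq[OF p q pq] by blast
  then have "card (P \<inter> Q) = 1" using i by simp
  moreover have "\<one> \<in> P \<inter> Q" by (rule subgroup.one_closed[OF I])
  moreover obtain z where "P \<inter> Q = {z}" using \<open>card (P \<inter> Q) = 1\<close> by (rule card_1_singletonE)
  ultimately show ?thesis by simp
qed
end


context group begin

lemma rcos_eq_D:
  assumes R: "subgroup R G" and x: "x \<in> carrier G" and y: "y \<in> carrier G" and e: "R #> x = R #> y"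
  shows "x \<otimes> inv y \<in> R"
proof -
  have "x \<in> R #> y" using rcos_self[OF x R] e by simp
  then show ?thesis using subgroup.rcos_module_imp[OF R is_group y] by blast
qed

lemma card_cosets_mult:
  assumes fin: "finite (carrier G)" and H: "subgroup H G" and R: "subgroup R G" and RH: "R \<subseteq> H"
  shows "card ((\<lambda>h. R #> h) ` H) * card R = card H"
proof -
  interpret GH: group "G\<lparr>carrier := H\<rparr>" using subgroup_imp_group[OF H] .
  have e: "rcosets\<^bsub>G\<lparr>carrier := H\<rparr>\<^esub> R = (\<lambda>h. R #> h) ` H"
    unfolding RCOSETS_def by auto
  from GH.lagrange[OF subgroup_incl[OF R H RH]]
  show ?thesis unfolding e by (simp add: order_def)
qed

lemma conj_subgroup:
  assumes R: "subgroup R G" and x: "x \<in> carrier G"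
  shows "subgroup ((\<lambda>a. inv x \<otimes> a \<otimes> x) ` R) G"
proof -
  have RG: "R \<subseteq> carrier G" using subgroup.subset[OF R] .
  show ?thesis
  proof
    show "(\<lambda>a. inv x \<otimes> a \<otimes> x) ` R \<subseteq> carrier G" using RG x by auto
    have "inv x \<otimes> \<one> \<otimes> x = \<one>" using x by simp
    then show "\<one> \<in> (\<lambda>a. inv x \<otimes> a \<otimes> x) ` R" using subgroup.one_closed[OF R] by (metis image_eqI)
  next
    fix u v assume "u \<in> (\<lambda>a. inv x \<otimes> a \<otimes> x) ` R" "v \<in> (\<lambda>a. inv x \<otimes> a \<otimes> x) ` R"
    then obtain a b where ab: "a \<in> R" "b \<in> R" "u = inv x \<otimes> a \<otimes> x" "v = inv x \<otimes> b \<otimes> x" by auto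
    have c: "a \<in> carrier G" "b \<in> carrier G" using ab RG by auto
    have "u \<otimes> v = inv x \<otimes> (a \<otimes> b) \<otimes> x" using ab(3,4) c x by (simp add: m_assoc)
    then show "u \<otimes> v \<in> (\<lambda>a. inv x \<otimes> a \<otimes> x) ` R" using subgroup.m_closed[OF R ab(1,2)] by blast
  next
    fix u assume "u \<in> (\<lambda>a. inv x \<otimes> a \<otimes> x) ` R"
    then obtain a where ab: "a \<in> R" "u = inv x \<otimes> a \<otimes> x" by auto
    have c: "a \<in> carrier G" using ab RG by auto
    have "inv u = inv x \<otimes> inv a \<otimes> x" using ab(2) c x by (simp add: m_assoc inv_mult_group)
    then show "inv u \<in> (\<lambda>a. inv x \<otimes> a \<otimes> x) ` R" using subgroup.m_inv_closed[OF R ab(1)] by blast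
  qed
qed

lemma card_conj:
  assumes R: "subgroup R G" and x: "x \<in> carrier G"
  shows "card ((\<lambda>a. inv x \<otimes> a \<otimes> x) ` R) = card R"
proof (rule card_image, rule inj_onI)
  fix u v assume uv: "u \<in> R" "v \<in> R" "inv x \<otimes> u \<otimes> x = inv x \<otimes> v \<otimes> x"
  have c: "u \<in> carrier G" "v \<in> carrier G" using uv subgroup.subset[OF R] by auto
  then show "u = v" using uv(3) x by (simp add: m_assoc)
qed

lemma coset_fix:
  assumes fin: "finite (carrier G)" and H: "subgroup H G" and R: "subgroup R G" and RH: "R \<subseteq> H"
    and B: "subgroup B G" and BH: "B \<subseteq> H" and cB: "card B = p ^ n" and p: "Factorial_Ring.prime p"
  shows "card ((\<lambda>h. R #> h) ` H) mod p
       = card {S \<in> (\<lambda>h. R #> h) ` H. \<forall>b\<in>B. S #> inv b = S} mod p"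
proof -
  have RG: "R \<subseteq> carrier G" using subgroup.subset[OF R] .
  have HG: "H \<subseteq> carrier G" using subgroup.subset[OF H] .
  have BG: "B \<subseteq> carrier G" using subgroup.subset[OF B] .
  interpret GB: group "G\<lparr>carrier := B\<rparr>" using subgroup_imp_group[OF B] .
  have inv_eq: "inv\<^bsub>G\<lparr>carrier := B\<rparr>\<^esub> b = inv b" if "b \<in> B" for b
    using that BG m_inv_consistent[OF B] by blast
  let ?X = "(\<lambda>h. R #> h) ` H"
  let ?f = "\<lambda>b S. S #> inv b"
  have "card ?X mod p = card {S \<in> ?X. \<forall>b\<in>carrier (G\<lparr>carrier := B\<rparr>). ?f b S = S} mod p"
  proof (rule fixed_point_mod[where H="G\<lparr>carrier := B\<rparr>" and n=n])
    show "group (G\<lparr>carrier := B\<rparr>)" by (rule GB.is_group)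
    show "finite (carrier (G\<lparr>carrier := B\<rparr>))" using finite_subset[OF BG fin] by simp
    show "card (carrier (G\<lparr>carrier := B\<rparr>)) = p ^ n" using cB by simp
    show "Factorial_Ring.prime p" by fact
    show "finite ?X" using finite_subset[OF HG fin] by simp
  next
    fix b S assume b: "b \<in> carrier (G\<lparr>carrier := B\<rparr>)" and S: "S \<in> ?X"
    obtain h where h: "h \<in> H" "S = R #> h" using S by auto
    have "S #> inv b = R #> (h \<otimes> inv b)"
      using h b RG HG BG by (simp add: coset_mult_assoc subsetD)
    moreover have "h \<otimes> inv b \<in> H" using subgroup.m_closed[OF H h(1) subgroup.m_inv_closed[OF H]] b BH by auto
    ultimately show "?f b S \<in> ?X" by auto
  next
    fix S assume S: "S \<in> ?X"
    then obtain h where h: "h \<in> H" "S = R #> h" by auto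
    have "S \<subseteq> carrier G" unfolding h(2) using r_coset_subset_G[OF RG] HG h(1) by blast
    then show "?f \<one>\<^bsub>G\<lparr>carrier := B\<rparr>\<^esub> S = S" by simp
  next
    fix a b S assume a: "a \<in> carrier (G\<lparr>carrier := B\<rparr>)" and b: "b \<in> carrier (G\<lparr>carrier := B\<rparr>)" and S: "S \<in> ?X"
    then obtain h where h: "h \<in> H" "S = R #> h" by auto
    have SG: "S \<subseteq> carrier G" unfolding h(2) using r_coset_subset_G[OF RG] HG h(1) by blast
    have ac: "a \<in> carrier G" "b \<in> carrier G" using a b BG by auto
    have "S #> inv (a \<otimes> b) = S #> (inv b \<otimes> inv a)" using ac by (simp add: inv_mult_group)
    also have "\<dots> = (S #> inv b) #> inv a" using coset_mult_assoc[OF SG] ac by simp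
    finally show "?f (a \<otimes>\<^bsub>G\<lparr>carrier := B\<rparr>\<^esub> b) S = ?f a (?f b S)" by simp
  qed
  then show ?thesis by simp
qed

end


context group begin

lemma max_sub_normal:
  assumes fin: "finite (carrier G)" and K: "subgroup K G" and cK: "card K = q ^ m" and q: "Factorial_Ring.prime q"
    and M: "subgroup M G" and MK: "M \<subset> K"
    and mx: "\<And>L. subgroup L G \<Longrightarrow> M \<subseteq> L \<Longrightarrow> L \<subseteq> K \<Longrightarrow> L = M \<or> L = K"
  shows "K \<subseteq> normalizer G M"
proof -
  have MG: "M \<subseteq> carrier G" using subgroup.subset[OF M] .
  have KG: "K \<subseteq> carrier G" using subgroup.subset[OF K] .
  obtain i where cM: "card M = q ^ i" using sub_pgroup[OF fin M K _ q cK] MK by auto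
  have finK: "finite K" using finite_subset[OF KG fin] .
  have "card M < card K" using psubset_card_mono[OF finK MK] .
  then have im: "i < m" using cM cK q prime_gt_1_nat power_less_imp_less_exp by metis
  let ?X = "(\<lambda>h. M #> h) ` K"
  have "card ?X * q ^ i = q ^ m" using card_cosets_mult[OF fin K M] MK cM cK by auto
  then have "card ?X * q ^ i = q ^ (m - i) * q ^ i" using im by (simp add: power_add[symmetric])
  then have "card ?X = q ^ (m - i)" using q by (simp add: prime_gt_0_nat)
  then have "card ?X mod q = 0" using im by simp
  then have fx0: "card {S \<in> ?X. \<forall>b\<in>M. S #> inv b = S} mod q = 0"
    using coset_fix[OF fin K M _ M _ cM q] MK by auto
  let ?F = "{S \<in> ?X. \<forall>b\<in>M. S #> inv b = S}"
  have MF: "M \<in> ?F"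
  proof -
    have "M = M #> \<one>" using MG by simp
    moreover have "\<one> \<in> K" by (rule subgroup.one_closed[OF K])
    ultimately have "M \<in> ?X" by blast
    moreover have "M #> inv b = M" if "b \<in> M" for b
      using subgroup.rcos_const[OF M is_group subgroup.m_inv_closed[OF M that]] .
    ultimately show ?thesis by blast
  qed
  have finF: "finite ?F" using finK by simp
  have "?F \<noteq> {}" using MF by blast
  then have "card ?F \<noteq> 0" using card_0_eq[OF finF] by blast
  then have "q dvd card ?F" "card ?F \<noteq> 0" using fx0 by auto
  then have "card ?F \<ge> q" using dvd_imp_le by blast
  moreover have "q \<ge> 2" using prime_ge_2_nat[OF q] .
  ultimately have "card ?F \<ge> 2" by linarith
  then obtain S where S: "S \<in> ?F" "S \<noteq> M"
  proof -
    have "\<not> ?F \<subseteq> {M}"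
    proof
      assume "?F \<subseteq> {M}"
      then have "card ?F \<le> card {M}" by (rule card_mono[rotated]) simp
      then show False using \<open>card ?F \<ge> 2\<close> by simp
    qed
    then show ?thesis using that by blast
  qed
  obtain g where g: "g \<in> K" "S = M #> g" using S(1) by auto
  have gc: "g \<in> carrier G" using g KG by auto
  have gM: "g \<notin> M"
  proof
    assume "g \<in> M"
    then have "M #> g = M" by (rule subgroup.rcos_const[OF M is_group])
    then show False using S g by simp
  qed
  have gN: "g \<in> normalizer G M"
  proof (rule norm_I[OF fin M gc])
    fix x assume x: "x \<in> M"
    have xc: "x \<in> carrier G" using x MG by auto
    have "inv x \<in> M" by (rule subgroup.m_inv_closed[OF M x])
    then have "M #> g #> inv (inv x) = M #> g" using S(1) g by auto
    then have "M #> (g \<otimes> x) = M #> g" using coset_mult_assoc[OF MG gc xc] xc by simp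
    then have "(g \<otimes> x) \<otimes> inv g \<in> M" using rcos_eq_D[OF M _ gc] gc xc by simp
    then show "g \<otimes> x \<otimes> inv g \<in> M" .
  qed
  let ?L = "K \<inter> normalizer G M"
  have L: "subgroup ?L G" using subgroups_Inter_pair[OF K norm_sub[OF M]] .
  have "M \<subseteq> ?L" using self_norm[OF fin M] MK by auto
  then have "?L = M \<or> ?L = K" using mx[OF L] by auto
  moreover have "?L \<noteq> M" using g gN gM by auto
  ultimately have "?L = K" by simp
  then show ?thesis by auto
qed

lemma max_sub_comm:
  assumes fin: "finite (carrier G)" and K: "subgroup K G" and M: "subgroup M G" and MK: "M \<subset> K"
    and KN: "K \<subseteq> normalizer G M"
    and mx: "\<And>L. subgroup L G \<Longrightarrow> M \<subseteq> L \<Longrightarrow> L \<subseteq> K \<Longrightarrow> L = M \<or> L = K"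
    and x: "x \<in> K" and y: "y \<in> K"
  shows "x \<otimes> y \<otimes> inv x \<otimes> inv y \<in> M"
proof -
  have MG: "M \<subseteq> carrier G" using subgroup.subset[OF M] .
  have KG: "K \<subseteq> carrier G" using subgroup.subset[OF K] .
  have nrm: "k \<otimes> u \<otimes> inv k \<in> M" if "k \<in> K" "u \<in> M" for k u
    using norm_D[OF fin M _ that(2)] KN that(1) by auto
  have xc: "x \<in> carrier G" using x KG by auto
  show ?thesis
  proof (cases "x \<in> M")
    case True
    have yc: "y \<in> carrier G" using y KG by auto
    have "y \<otimes> inv x \<otimes> inv y \<in> M" using nrm[OF y subgroup.m_inv_closed[OF M True]] .
    then have "x \<otimes> (y \<otimes> inv x \<otimes> inv y) \<in> M" by (rule subgroup.m_closed[OF M True])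
    then show ?thesis using xc yc by (simp add: m_assoc)
  next
    case False
    let ?T = "{y \<in> K. x \<otimes> y \<otimes> inv x \<otimes> inv y \<in> M}"
    have T: "subgroup ?T G"
    proof
      show "?T \<subseteq> carrier G" using KG by auto
      have "x \<otimes> \<one> \<otimes> inv x \<otimes> inv \<one> = \<one>" using xc by simp
      then show "\<one> \<in> ?T" using subgroup.one_closed[OF K] subgroup.one_closed[OF M] by simp
    next
      fix y1 y2 assume y1: "y1 \<in> ?T" and y2: "y2 \<in> ?T"
      have c: "y1 \<in> carrier G" "y2 \<in> carrier G" using y1 y2 KG by auto
      let ?c1 = "x \<otimes> y1 \<otimes> inv x \<otimes> inv y1" and ?c2 = "x \<otimes> y2 \<otimes> inv x \<otimes> inv y2"
      have e: "x \<otimes> (y1 \<otimes> y2) \<otimes> inv x \<otimes> inv (y1 \<otimes> y2) = ?c1 \<otimes> (y1 \<otimes> ?c2 \<otimes> inv y1)"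
        using c xc by (simp add: m_assoc inv_mult_group)
      have "y1 \<otimes> ?c2 \<otimes> inv y1 \<in> M" using nrm y1 y2 by auto
      then have "?c1 \<otimes> (y1 \<otimes> ?c2 \<otimes> inv y1) \<in> M" using subgroup.m_closed[OF M] y1 by auto
      moreover have "y1 \<otimes> y2 \<in> K" using subgroup.m_closed[OF K] y1 y2 by auto
      ultimately show "y1 \<otimes> y2 \<in> ?T" using e by simp
    next
      fix y1 assume y1: "y1 \<in> ?T"
      have c: "y1 \<in> carrier G" using y1 KG by auto
      let ?c1 = "x \<otimes> y1 \<otimes> inv x \<otimes> inv y1"
      have e: "x \<otimes> inv y1 \<otimes> inv x \<otimes> inv (inv y1) = inv y1 \<otimes> inv ?c1 \<otimes> inv (inv y1)"
        using c xc by (simp add: m_assoc inv_mult_group)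
      have iy: "inv y1 \<in> K" using subgroup.m_inv_closed[OF K] y1 by auto
      have "inv ?c1 \<in> M" using subgroup.m_inv_closed[OF M] y1 by auto
      then have "inv y1 \<otimes> inv ?c1 \<otimes> inv (inv y1) \<in> M" using nrm[OF iy] by auto
      then show "inv y1 \<in> ?T" using e iy by simp
    qed
    have "M \<subseteq> ?T"
    proof
      fix u assume u: "u \<in> M"
      have uc: "u \<in> carrier G" using u MG by auto
      have "x \<otimes> u \<otimes> inv x \<in> M" using nrm[OF x u] .
      then have "(x \<otimes> u \<otimes> inv x) \<otimes> inv u \<in> M" using subgroup.m_closed[OF M _ subgroup.m_inv_closed[OF M u]] by auto
      then show "u \<in> ?T" using u MK by auto
    qed
    moreover have "x \<in> ?T" using x xc subgroup.one_closed[OF M] by (simp add: m_assoc)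
    ultimately have "?T = K" using mx[OF T] False by auto
    then show ?thesis using y by auto
  qed
qed

end


context group begin

lemma coprime_cent_in:
  assumes fin: "finite (carrier G)" and K: "subgroup K G" and cK: "card K = q ^ m"
    and P: "subgroup P G" and cP: "card P = p ^ n"
    and p: "Factorial_Ring.prime p" and q: "Factorial_Ring.prime q" and pq: "p \<noteq> q"
    and PK: "P \<subseteq> normalizer G K"
    and N: "subgroup N G" and NK: "N \<subseteq> K"
    and Nn: "\<And>k x. k \<in> K \<Longrightarrow> x \<in> N \<Longrightarrow> k \<otimes> x \<otimes> inv k \<in> N"
    and NP: "\<And>a x. a \<in> P \<Longrightarrow> x \<in> N \<Longrightarrow> a \<otimes> x \<otimes> inv a \<in> N"
    and comm: "\<And>x y. x \<in> K \<Longrightarrow> y \<in> K \<Longrightarrow> x \<otimes> y \<otimes> inv x \<otimes> inv y \<in> N"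
    and gen: "K \<subseteq> generate G {k \<otimes> a \<otimes> inv k \<otimes> inv a | k a. k \<in> K \<and> a \<in> P}"
    and c: "c \<in> K" and cc: "\<And>a. a \<in> P \<Longrightarrow> c \<otimes> a = a \<otimes> c"
  shows "c \<in> N"
proof -
  have KG: "K \<subseteq> carrier G" using subgroup.subset[OF K] .
  have PG: "P \<subseteq> carrier G" using subgroup.subset[OF P] .
  have NG: "N \<subseteq> carrier G" using subgroup.subset[OF N] .
  define GK where "GK = G\<lparr>carrier := K\<rparr>"
  interpret GK: group GK unfolding GK_def using subgroup_imp_group[OF K] .
  have invK: "inv\<^bsub>GK\<^esub> x = inv x" if "x \<in> K" for x
    unfolding GK_def using m_inv_consistent[OF K that] .
  have nN: "N \<lhd> GK"
  proof (rule GK.normal_invI)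
    show "subgroup N GK" unfolding GK_def by (rule subgroup_incl[OF N K NK])
    fix x h assume "x \<in> carrier GK" "h \<in> N"
    then show "x \<otimes>\<^bsub>GK\<^esub> h \<otimes>\<^bsub>GK\<^esub> inv\<^bsub>GK\<^esub> x \<in> N"
      using invK Nn by (simp add: GK_def)
  qed
  interpret nN: normal N GK by (rule nN)
  define A where "A = GK Mod N"
  interpret A: group A unfolding A_def by (rule nN.factorgroup_is_group)
  have carA: "carrier A = (\<lambda>x. N #> x) ` K"
    unfolding A_def FactGroup_def RCOSETS_def by (auto simp: GK_def)
  have oneA: "\<one>\<^bsub>A\<^esub> = N" unfolding A_def FactGroup_def by simp
  have multA: "(N #> x) \<otimes>\<^bsub>A\<^esub> (N #> y) = N #> (x \<otimes> y)" if "x \<in> K" "y \<in> K" for x y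
  proof -
    have "(N #>\<^bsub>GK\<^esub> x) <#>\<^bsub>GK\<^esub> (N #>\<^bsub>GK\<^esub> y) = N #>\<^bsub>GK\<^esub> (x \<otimes>\<^bsub>GK\<^esub> y)"
      using nN.rcos_sum that by (simp add: GK_def)
    then show ?thesis unfolding A_def FactGroup_def by (simp add: GK_def)
  qed
  have coseq: "N #> x = N #> y" if "x \<in> K" "y \<in> K" "x \<otimes> inv y \<in> N" for x y
  proof -
    have xc: "x \<in> carrier G" "y \<in> carrier G" using that KG by auto
    have "x \<in> N #> y" using subgroup.rcos_module_rev[OF N is_group xc(2) xc(1) that(3)] .
    then show ?thesis using repr_independence[OF _ xc(2) N] by simp
  qed
  interpret cA: comm_group A
  proof (rule A.group_comm_groupI)
    fix Uu Vv assume Uu: "Uu \<in> carrier A" and Vv: "Vv \<in> carrier A"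
    obtain x where x: "x \<in> K" "Uu = N #> x" using Uu carA by auto
    obtain y where y: "y \<in> K" "Vv = N #> y" using Vv carA by auto
    have xc: "x \<in> carrier G" "y \<in> carrier G" using x y KG by auto
    have "(x \<otimes> y) \<otimes> inv (y \<otimes> x) = x \<otimes> y \<otimes> inv x \<otimes> inv y" using xc by (simp add: m_assoc inv_mult_group)
    then have "(x \<otimes> y) \<otimes> inv (y \<otimes> x) \<in> N" using comm[OF x(1) y(1)] by simp
    then have "N #> (x \<otimes> y) = N #> (y \<otimes> x)"
      using coseq subgroup.m_closed[OF K] x y by blast
    then show "Uu \<otimes>\<^bsub>A\<^esub> Vv = Vv \<otimes>\<^bsub>A\<^esub> Uu" using multA x y by simp
  qed
  have conjK: "a \<otimes> x \<otimes> inv a \<in> K" if "a \<in> P" "x \<in> K" for a x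
    using norm_D[OF fin K _ that(2)] PK that(1) by auto
  have cosA: "N #> x \<in> carrier A" if "x \<in> K" for x using carA that by auto
  define \<pi> where "\<pi> x = finprod A (\<lambda>a. N #> (a \<otimes> x \<otimes> inv a)) P" for x
  have piC: "(\<lambda>a. N #> (a \<otimes> x \<otimes> inv a)) \<in> P \<rightarrow> carrier A" if "x \<in> K" for x
    using cosA conjK that by auto
  have piA: "\<pi> x \<in> carrier A" if "x \<in> K" for x
    unfolding \<pi>_def using cA.finprod_closed[OF piC[OF that]] .
  have piM: "\<pi> (x \<otimes> y) = \<pi> x \<otimes>\<^bsub>A\<^esub> \<pi> y" if x: "x \<in> K" and y: "y \<in> K" for x y
  proof -
    have "\<pi> (x \<otimes> y) = finprod A (\<lambda>a. (N #> (a \<otimes> x \<otimes> inv a)) \<otimes>\<^bsub>A\<^esub> (N #> (a \<otimes> y \<otimes> inv a))) P"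
      unfolding \<pi>_def
    proof (rule cA.finprod_cong')
      show "(\<lambda>a. (N #> (a \<otimes> x \<otimes> inv a)) \<otimes>\<^bsub>A\<^esub> (N #> (a \<otimes> y \<otimes> inv a))) \<in> P \<rightarrow> carrier A"
      proof (rule Pi_I)
        fix a assume a: "a \<in> P"
        show "(N #> (a \<otimes> x \<otimes> inv a)) \<otimes>\<^bsub>A\<^esub> (N #> (a \<otimes> y \<otimes> inv a)) \<in> carrier A"
          by (rule A.m_closed[OF cosA[OF conjK[OF a x]] cosA[OF conjK[OF a y]]])
      qed
      fix a assume a: "a \<in> P"
      have ac: "a \<in> carrier G" "x \<in> carrier G" "y \<in> carrier G" using a x y PG KG by auto
      have "a \<otimes> (x \<otimes> y) \<otimes> inv a = (a \<otimes> x \<otimes> inv a) \<otimes> (a \<otimes> y \<otimes> inv a)" using ac by (simp add: m_assoc)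
      then show "N #> (a \<otimes> (x \<otimes> y) \<otimes> inv a) = (N #> (a \<otimes> x \<otimes> inv a)) \<otimes>\<^bsub>A\<^esub> (N #> (a \<otimes> y \<otimes> inv a))"
        using multA[OF conjK[OF a x] conjK[OF a y]] by simp
    qed simp
    also have "\<dots> = \<pi> x \<otimes>\<^bsub>A\<^esub> \<pi> y" unfolding \<pi>_def by (rule cA.finprod_multf[OF piC[OF x] piC[OF y]])
    finally show ?thesis .
  qed
  have pi1: "\<pi> \<one> = \<one>\<^bsub>A\<^esub>"
    unfolding \<pi>_def
  proof (rule cA.finprod_one_eqI)
    fix a assume "a \<in> P"
    then have "a \<otimes> \<one> \<otimes> inv a = \<one>" using PG by auto
    then show "N #> (a \<otimes> \<one> \<otimes> inv a) = \<one>\<^bsub>A\<^esub>" using oneA NG by simp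
  qed
  have piI: "\<pi> (inv x) = inv\<^bsub>A\<^esub> (\<pi> x)" if x: "x \<in> K" for x
  proof -
    have ix: "inv x \<in> K" using subgroup.m_inv_closed[OF K x] .
    have "\<pi> (inv x) \<otimes>\<^bsub>A\<^esub> \<pi> x = \<pi> (inv x \<otimes> x)" using piM[OF ix x] by simp
    also have "\<dots> = \<one>\<^bsub>A\<^esub>" using x KG pi1 by auto
    finally show ?thesis using A.inv_equality piA x ix by simp
  qed
  have piConj: "\<pi> (b \<otimes> x \<otimes> inv b) = \<pi> x" if b: "b \<in> P" and x: "x \<in> K" for b x
  proof -
    have bc: "b \<in> carrier G" using b PG by auto
    define f where "f a = N #> (a \<otimes> x \<otimes> inv a)" for a
    have img: "(\<lambda>a. a \<otimes> b) ` P = P"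
    proof
      show "(\<lambda>a. a \<otimes> b) ` P \<subseteq> P" using subgroup.m_closed[OF P _ b] by auto
      show "P \<subseteq> (\<lambda>a. a \<otimes> b) ` P"
      proof
        fix u assume u: "u \<in> P"
        have "u = (u \<otimes> inv b) \<otimes> b" using u PG bc by (simp add: m_assoc subsetD)
        moreover have "u \<otimes> inv b \<in> P" using subgroup.m_closed[OF P u subgroup.m_inv_closed[OF P b]] .
        ultimately show "u \<in> (\<lambda>a. a \<otimes> b) ` P" by blast
      qed
    qed
    have inj: "inj_on (\<lambda>a. a \<otimes> b) P"
      by (rule inj_onI) (use PG bc in \<open>auto simp: subsetD\<close>)
    have "\<pi> (b \<otimes> x \<otimes> inv b) = finprod A (\<lambda>a. f (a \<otimes> b)) P"
      unfolding \<pi>_def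
    proof (rule cA.finprod_cong')
      show "(\<lambda>a. f (a \<otimes> b)) \<in> P \<rightarrow> carrier A"
        using piC[OF x] subgroup.m_closed[OF P _ b] unfolding f_def by auto
      fix a assume a: "a \<in> P"
      have ac: "a \<in> carrier G" "x \<in> carrier G" using a x PG KG by auto
      have "a \<otimes> (b \<otimes> x \<otimes> inv b) \<otimes> inv a = (a \<otimes> b) \<otimes> x \<otimes> inv (a \<otimes> b)"
        using ac bc by (simp add: m_assoc inv_mult_group)
      then show "N #> (a \<otimes> (b \<otimes> x \<otimes> inv b) \<otimes> inv a) = f (a \<otimes> b)" unfolding f_def by simp
    qed simp
    also have "\<dots> = finprod A f ((\<lambda>a. a \<otimes> b) ` P)"
      using cA.finprod_reindex[of f "\<lambda>a. a \<otimes> b" P, OF _ inj] img piC[OF x] unfolding f_def by simp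
    also have "\<dots> = \<pi> x" unfolding img \<pi>_def f_def ..
    finally show ?thesis .
  qed
  define Z where "Z = {x \<in> K. \<pi> x = \<one>\<^bsub>A\<^esub>}"
  have Z: "subgroup Z G"
  proof
    show "Z \<subseteq> carrier G" using KG Z_def by auto
    show "\<one> \<in> Z" using pi1 subgroup.one_closed[OF K] Z_def by auto
  next
    fix x y assume "x \<in> Z" "y \<in> Z"
    then show "x \<otimes> y \<in> Z" using piM subgroup.m_closed[OF K] Z_def by auto
  next
    fix x assume "x \<in> Z"
    then show "inv x \<in> Z" using piI subgroup.m_inv_closed[OF K] Z_def by auto
  qed
  have SZ: "{k \<otimes> a \<otimes> inv k \<otimes> inv a | k a. k \<in> K \<and> a \<in> P} \<subseteq> Z"
  proof
    fix g assume "g \<in> {k \<otimes> a \<otimes> inv k \<otimes> inv a | k a. k \<in> K \<and> a \<in> P}"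
    then obtain k a where ka: "k \<in> K" "a \<in> P" "g = k \<otimes> a \<otimes> inv k \<otimes> inv a" by auto
    have kc: "k \<in> carrier G" "a \<in> carrier G" using ka KG PG by auto
    have y: "a \<otimes> k \<otimes> inv a \<in> K" using conjK[OF ka(2,1)] .
    have ge: "g = k \<otimes> inv (a \<otimes> k \<otimes> inv a)" using ka(3) kc by (simp add: m_assoc inv_mult_group)
    have ik: "inv (a \<otimes> k \<otimes> inv a) \<in> K" using subgroup.m_inv_closed[OF K y] .
    have gK: "g \<in> K" using ge subgroup.m_closed[OF K ka(1) ik] by simp
    have "\<pi> g = \<pi> k \<otimes>\<^bsub>A\<^esub> inv\<^bsub>A\<^esub> (\<pi> (a \<otimes> k \<otimes> inv a))" using ge piM[OF ka(1) ik] piI[OF y] by simp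
    also have "\<dots> = \<one>\<^bsub>A\<^esub>" using piConj[OF ka(2,1)] piA[OF ka(1)] by simp
    finally show "g \<in> Z" using gK Z_def by simp
  qed
  have "K \<subseteq> Z" using gen generate_subgroup_incl[OF SZ Z] by blast
  then have pic: "\<pi> c = \<one>\<^bsub>A\<^esub>" using c Z_def by auto
  have cG: "c \<in> carrier G" using c KG by auto
  have "\<pi> c = finprod A (\<lambda>a. N #> c) P"
    unfolding \<pi>_def
  proof (rule cA.finprod_cong')
    show "(\<lambda>a. N #> c) \<in> P \<rightarrow> carrier A" using cosA[OF c] by auto
    fix a assume a: "a \<in> P"
    have ac: "a \<in> carrier G" using a PG by auto
    have "a \<otimes> c \<otimes> inv a = c \<otimes> a \<otimes> inv a" using cc[OF a] by simp
    also have "\<dots> = c" using ac cG by (simp add: m_assoc)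
    finally have "a \<otimes> c \<otimes> inv a = c" .
    then show "N #> (a \<otimes> c \<otimes> inv a) = N #> c" by simp
  qed simp
  also have "\<dots> = (N #> c) [^]\<^bsub>A\<^esub> card P" using cA.finprod_const[OF cosA[OF c]] .
  finally have Xa: "(N #> c) [^]\<^bsub>A\<^esub> (p ^ n) = \<one>\<^bsub>A\<^esub>" using pic cP by simp
  have "card (carrier A) * card N = card K"
  proof -
    have "card (rcosets\<^bsub>GK\<^esub> N) * card N = order GK" using GK.lagrange[OF nN.subgroup_axioms] .
    then show ?thesis unfolding A_def FactGroup_def order_def GK_def by simp
  qed
  then have oA: "order A * card N = q ^ m" using cK unfolding order_def by simp
  have "(N #> c) [^]\<^bsub>A\<^esub> (q ^ m) = ((N #> c) [^]\<^bsub>A\<^esub> order A) [^]\<^bsub>A\<^esub> card N"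
    using A.nat_pow_pow[OF cosA[OF c]] oA by simp
  also have "\<dots> = \<one>\<^bsub>A\<^esub>" using A.pow_order_eq_1[OF cosA[OF c]] by simp
  finally have X2: "(N #> c) [^]\<^bsub>A\<^esub> (q ^ m) = \<one>\<^bsub>A\<^esub>" .
  have d1: "A.ord (N #> c) dvd p ^ n" using Xa A.pow_eq_id[OF cosA[OF c]] by simp
  have d2: "A.ord (N #> c) dvd q ^ m" using X2 A.pow_eq_id[OF cosA[OF c]] by simp
  obtain i where i: "A.ord (N #> c) = p ^ i" using d1 divides_primepow_nat[OF p] by auto
  obtain j where j: "A.ord (N #> c) = q ^ j" using d2 divides_primepow_nat[OF q] by auto
  have "p ^ i = q ^ j" using i j by simp
  then have "i = 0" using prime_pow_eq[OF p q pq] by blast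
  then have "A.ord (N #> c) = 1" using i by simp
  then have "N #> c = \<one>\<^bsub>A\<^esub>" using A.ord_eq_1[OF cosA[OF c]] by simp
  then have "N #> c = N" using oneA by simp
  then show "c \<in> N" using rcos_self[OF cG N] by simp
qed

end


locale L53 = group G for G (structure) +
  fixes p q :: nat and P Q Q1 :: "'a set" and na nb nc :: nat
  assumes fin: "finite (carrier G)"
    and pp: "Factorial_Ring.prime p" and qp: "Factorial_Ring.prime q" and pq: "p \<noteq> q"
    and P: "subgroup P G" and cP: "card P = p ^ na"
    and Q: "subgroup Q G" and cQ: "card Q = q ^ nb"
    and Q1: "subgroup Q1 G" and cQ1: "card Q1 = q ^ nc"
    and Q1Q: "Q1 \<subseteq> Q" and PN: "P \<subseteq> normalizer G Q1" and QN: "Q \<subseteq> normalizer G (Q1 <#> P)"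
begin

lemma PG: "P \<subseteq> carrier G" using subgroup.subset[OF P] .
lemma QG: "Q \<subseteq> carrier G" using subgroup.subset[OF Q] .
lemma Q1G: "Q1 \<subseteq> carrier G" using subgroup.subset[OF Q1] .

lemma PQ: "P \<inter> Q = {\<one>}" using coprime_inter[OF fin P Q pp qp pq cP cQ] .
lemma PQ1: "P \<inter> Q1 = {\<one>}" using coprime_inter[OF fin P Q1 pp qp pq cP cQ1] .

definition "Q1P = Q1 <#> P"

lemma Q1P: "subgroup Q1P G" unfolding Q1P_def by (rule mult_norm_subgroup'[OF fin Q1 P PN])
lemma Q1P_comm: "Q1P = P <#> Q1" unfolding Q1P_def by (rule mult_norm_comm[OF fin Q1 P PN])
lemma Q1_Q1P: "Q1 \<subseteq> Q1P"
proof
  fix y assume y: "y \<in> Q1"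
  have "y \<otimes> \<one> \<in> Q1 <#> P" by (rule set_multI[OF y subgroup.one_closed[OF P]])
  then show "y \<in> Q1P" using y Q1G Q1P_def by auto
qed
lemma P_Q1P: "P \<subseteq> Q1P"
proof
  fix y assume y: "y \<in> P"
  have "\<one> \<otimes> y \<in> Q1 <#> P" by (rule set_multI[OF subgroup.one_closed[OF Q1] y])
  then show "y \<in> Q1P" using y PG Q1P_def by auto
qed

lemma QN1: "Q \<subseteq> normalizer G Q1"
proof
  fix x assume x: "x \<in> Q"
  have xc: "x \<in> carrier G" using x QG by auto
  show "x \<in> normalizer G Q1"
  proof (rule norm_I[OF fin Q1 xc])
    fix y assume y: "y \<in> Q1"
    have yQ: "y \<in> Q" using y Q1Q by auto
    have zQ: "x \<otimes> y \<otimes> inv x \<in> Q"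
      using subgroup.m_closed[OF Q subgroup.m_closed[OF Q x yQ] subgroup.m_inv_closed[OF Q x]] .
    have "x \<otimes> y \<otimes> inv x \<in> Q1P" using norm_D[OF fin Q1P _ , of x y] QN x Q1_Q1P y Q1P_def by auto
    then obtain y' a where ya: "y' \<in> Q1" "a \<in> P" "x \<otimes> y \<otimes> inv x = y' \<otimes> a" unfolding Q1P_def by (rule set_multE)
    have c: "y' \<in> carrier G" "a \<in> carrier G" using ya Q1G PG by auto
    have "a = inv y' \<otimes> (x \<otimes> y \<otimes> inv x)" using ya(3) c by simp
    moreover have "inv y' \<in> Q" using subgroup.m_inv_closed[OF Q] ya(1) Q1Q by auto
    ultimately have "a \<in> Q" using subgroup.m_closed[OF Q _ zQ] by simp
    then have "a = \<one>" using PQ ya(2) by auto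
    then show "x \<otimes> y \<otimes> inv x \<in> Q1" using ya c by simp
  qed
qed

definition "QP = Q <#> P"

lemma QP_eq: "Q <#> Q1P = QP"
proof
  show "Q <#> Q1P \<subseteq> QP"
  proof
    fix x assume "x \<in> Q <#> Q1P"
    then obtain u v where uv: "u \<in> Q" "v \<in> Q1P" "x = u \<otimes> v" by (rule set_multE)
    obtain y a where ya: "y \<in> Q1" "a \<in> P" "v = y \<otimes> a" using uv(2) unfolding Q1P_def by (rule set_multE)
    have c: "u \<in> carrier G" "y \<in> carrier G" "a \<in> carrier G" using uv ya QG Q1G PG by auto
    have "x = (u \<otimes> y) \<otimes> a" using uv(3) ya(3) c by (simp add: m_assoc)
    moreover have "u \<otimes> y \<in> Q" using subgroup.m_closed[OF Q uv(1)] ya(1) Q1Q by auto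
    ultimately show "x \<in> QP" unfolding QP_def using set_multI ya(2) by blast
  qed
  show "QP \<subseteq> Q <#> Q1P"
  proof
    fix x assume "x \<in> QP"
    then obtain u a where ua: "u \<in> Q" "a \<in> P" "x = u \<otimes> a" unfolding QP_def by (rule set_multE)
    show "x \<in> Q <#> Q1P" using ua P_Q1P set_multI by blast
  qed
qed

lemma QP: "subgroup QP G"
proof -
  have "subgroup (Q1P <#> Q) G" by (rule mult_norm_subgroup'[OF fin Q1P Q QN[folded Q1P_def]])
  moreover have "Q1P <#> Q = Q <#> Q1P" by (rule mult_norm_comm[OF fin Q1P Q QN[folded Q1P_def]])
  ultimately show ?thesis using QP_eq by simp
qed

lemma QPG: "QP \<subseteq> carrier G" using subgroup.subset[OF QP] .

lemma Q_QP: "Q \<subseteq> QP"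
proof
  fix y assume y: "y \<in> Q"
  have "y \<otimes> \<one> \<in> Q <#> P" by (rule set_multI[OF y subgroup.one_closed[OF P]])
  then show "y \<in> QP" using y QG QP_def by auto
qed
lemma P_QP: "P \<subseteq> QP"
proof
  fix y assume y: "y \<in> P"
  have "\<one> \<otimes> y \<in> Q <#> P" by (rule set_multI[OF subgroup.one_closed[OF Q] y])
  then show "y \<in> QP" using y PG QP_def by auto
qed
lemma Q1P_QP: "Q1P \<subseteq> QP"
  unfolding Q1P_def QP_def using mono_set_mult[OF Q1Q subset_refl] .

lemma cQP: "card QP = q ^ nb * p ^ na"
  unfolding QP_def using card_mult_disjoint[OF fin Q P] PQ cP cQ by (simp add: Int_commute)

lemma QP_norm:
  assumes "subgroup H G" "Q \<subseteq> normalizer G H" "P \<subseteq> normalizer G H"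
  shows "QP \<subseteq> normalizer G H"
proof
  fix x assume "x \<in> QP"
  then obtain u a where ua: "u \<in> Q" "a \<in> P" "x = u \<otimes> a" unfolding QP_def by (rule set_multE)
  show "x \<in> normalizer G H" using subgroup.m_closed[OF norm_sub[OF assms(1)]] ua assms(2,3) by auto
qed

lemma Q1P_normal: "Q1P \<lhd> G\<lparr>carrier := QP\<rparr>"
proof (rule normal_sub[OF fin QP Q1P Q1P_QP])
  show "QP \<subseteq> normalizer G Q1P"
    using QP_norm[OF Q1P QN[folded Q1P_def]] P_Q1P self_norm[OF fin Q1P] by blast
qed

lemma Q1_normal: "Q1 \<lhd> G\<lparr>carrier := QP\<rparr>"
  using normal_sub[OF fin QP Q1 _ QP_norm[OF Q1 QN1 PN]] Q1Q Q_QP by blast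

lemma mult_q: "multiplicity q (q ^ nb * p ^ na) = nb"
proof -
  have "\<not> q dvd p" using primes_dvd_imp_eq[OF qp pp] pq by auto
  then have "\<not> q dvd p ^ na" using prime_dvd_power[OF qp] by blast
  then have "multiplicity q (p ^ na) = 0" by (rule not_dvd_imp_multiplicity_0)
  moreover have "multiplicity q (q ^ nb * p ^ na) = multiplicity q (q ^ nb) + multiplicity q (p ^ na)"
    using prime_elem_multiplicity_mult_distrib[of q "q ^ nb" "p ^ na"] qp pp prime_gt_0_nat by auto
  ultimately show ?thesis using qp by simp
qed

lemma mult_p: "multiplicity p (q ^ nb * p ^ na) = na"
proof -
  have "\<not> p dvd q" using primes_dvd_imp_eq[OF pp qp] pq by auto
  then have "\<not> p dvd q ^ nb" using prime_dvd_power[OF pp] by blast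
  then have "multiplicity p (q ^ nb) = 0" by (rule not_dvd_imp_multiplicity_0)
  moreover have "multiplicity p (q ^ nb * p ^ na) = multiplicity p (q ^ nb) + multiplicity p (p ^ na)"
    using prime_elem_multiplicity_mult_distrib[of p "q ^ nb" "p ^ na"] qp pp prime_gt_0_nat by auto
  ultimately show ?thesis using pp by simp
qed

lemma sylow_Q: "sylow_subgroup (G\<lparr>carrier := QP\<rparr>) q Q"
  unfolding sylow_subgroup_def order_def using subgroup_incl[OF Q QP Q_QP] cQP mult_q cQ by simp

lemma sylow_P: "sylow_subgroup (G\<lparr>carrier := QP\<rparr>) p P"
  unfolding sylow_subgroup_def order_def using subgroup_incl[OF P QP P_QP] cQP mult_p cP by simp

end


context L53 begin

definition "Sg = {a \<otimes> b \<otimes> inv a \<otimes> inv b | a b. a \<in> Q1 \<and> b \<in> P}"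
definition "K = commutator_subgroup G Q1 P"

lemma K_gen: "K = generate G Sg" by (simp only: K_def commutator_subgroup_def Sg_def)

lemma Sg_Q1: "Sg \<subseteq> Q1"
proof
  fix g assume "g \<in> Sg"
  then obtain y a where ya: "y \<in> Q1" "a \<in> P" "g = y \<otimes> a \<otimes> inv y \<otimes> inv a" unfolding Sg_def by auto
  have c: "y \<in> carrier G" "a \<in> carrier G" using ya Q1G PG by auto
  have "a \<otimes> inv y \<otimes> inv a \<in> Q1" using norm_D[OF fin Q1 _ subgroup.m_inv_closed[OF Q1 ya(1)]] PN ya(2) by auto
  then have "y \<otimes> (a \<otimes> inv y \<otimes> inv a) \<in> Q1" by (rule subgroup.m_closed[OF Q1 ya(1)])
  then show "g \<in> Q1" using ya(3) c by (simp add: m_assoc)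
qed

lemma SgG: "Sg \<subseteq> carrier G" by (rule subset_trans[OF Sg_Q1 Q1G])

lemma K: "subgroup K G" unfolding K_gen by (rule generate_is_subgroup[OF SgG])
lemma KQ1: "K \<subseteq> Q1" unfolding K_gen by (rule generate_subgroup_incl[OF Sg_Q1 Q1])
lemma KG: "K \<subseteq> carrier G" by (rule subset_trans[OF KQ1 Q1G])
lemma SgK: "Sg \<subseteq> K" unfolding K_gen by (rule subsetI, rule generate.incl)

lemma K_norm:
  assumes g1: "g \<in> normalizer G Q1" and g2: "g \<in> normalizer G P"
  shows "g \<in> normalizer G K"
proof -
  have gc: "g \<in> carrier G" using norm_carrier[OF P g2] .
  let ?T = "{x \<in> carrier G. g \<otimes> x \<otimes> inv g \<in> K}"
  have T: "subgroup ?T G"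
  proof
    show "?T \<subseteq> carrier G" by auto
    show "\<one> \<in> ?T" using gc subgroup.one_closed[OF K] by simp
  next
    fix x y assume x: "x \<in> ?T" and y: "y \<in> ?T"
    have "g \<otimes> (x \<otimes> y) \<otimes> inv g = (g \<otimes> x \<otimes> inv g) \<otimes> (g \<otimes> y \<otimes> inv g)" using x y gc by (simp add: m_assoc)
    then show "x \<otimes> y \<in> ?T" using subgroup.m_closed[OF K] x y by auto
  next
    fix x assume x: "x \<in> ?T"
    have "g \<otimes> inv x \<otimes> inv g = inv (g \<otimes> x \<otimes> inv g)" using x gc by (simp add: m_assoc inv_mult_group)
    then show "inv x \<in> ?T" using subgroup.m_inv_closed[OF K] x by auto
  qed
  have "Sg \<subseteq> ?T"
  proof
    fix s assume "s \<in> Sg"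
    then obtain y a where ya: "y \<in> Q1" "a \<in> P" "s = y \<otimes> a \<otimes> inv y \<otimes> inv a" unfolding Sg_def by auto
    have c: "y \<in> carrier G" "a \<in> carrier G" using ya Q1G PG by auto
    have y': "g \<otimes> y \<otimes> inv g \<in> Q1" using norm_D[OF fin Q1 g1 ya(1)] .
    have a': "g \<otimes> a \<otimes> inv g \<in> P" using norm_D[OF fin P g2 ya(2)] .
    have e: "g \<otimes> s \<otimes> inv g = (g \<otimes> y \<otimes> inv g) \<otimes> (g \<otimes> a \<otimes> inv g) \<otimes> inv (g \<otimes> y \<otimes> inv g) \<otimes> inv (g \<otimes> a \<otimes> inv g)"
      using ya(3) c gc by (simp add: m_assoc inv_mult_group)
    have "g \<otimes> s \<otimes> inv g \<in> Sg" unfolding e Sg_def using y' a' by blast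
    then show "s \<in> ?T" using SgK SgG \<open>s \<in> Sg\<close> by auto
  qed
  then have "generate G Sg \<subseteq> ?T" by (rule generate_subgroup_incl[OF _ T])
  then have "K \<subseteq> ?T" using K_gen by simp
  then have "\<And>h. h \<in> K \<Longrightarrow> g \<otimes> h \<otimes> inv g \<in> K" by blast
  then show ?thesis by (rule norm_I[OF fin K gc])
qed

lemma PNK: "P \<subseteq> normalizer G K"
proof
  fix a assume a: "a \<in> P"
  have "a \<in> normalizer G Q1" using PN a by (rule subsetD)
  moreover have "a \<in> normalizer G P" using self_norm[OF fin P] a by (rule subsetD)
  ultimately show "a \<in> normalizer G K" by (rule K_norm)
qed

definition "NQ = Q \<inter> normalizer G P"
lemma NQ: "subgroup NQ G" unfolding NQ_def by (rule subgroups_Inter_pair[OF Q norm_sub[OF P]])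

definition "CQ1 = centralizer_in G Q1 P"

lemma Q1_decomp: "Q1 \<subseteq> K <#> CQ1"
proof
  fix y assume y: "y \<in> Q1"
  have yc: "y \<in> carrier G" using y Q1G by auto
  let ?S = "K #> y"
  have finS: "finite ?S" using finite_subset[OF r_coset_subset_G[OF KG yc] fin] .
  have "card K = card ?S" by (rule card_rcosets_equal[OF rcosetsI[OF KG yc] KG])
  moreover obtain j where "card K = q ^ j" using sub_pgroup[OF fin K Q1 KQ1 qp cQ1] by blast
  ultimately have cS: "card ?S = q ^ j" by simp
  have ndvd: "\<not> p dvd q ^ j"
  proof
    assume "p dvd q ^ j"
    then have "p dvd q" using prime_dvd_power[OF pp] by blast
    then show False using primes_dvd_imp_eq[OF pp qp] pq by blast
  qed
  interpret GP: group "G\<lparr>carrier := P\<rparr>" using subgroup_imp_group[OF P] .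
  let ?f = "\<lambda>a z. a \<otimes> z \<otimes> inv a"
  have "card ?S mod p = card {z \<in> ?S. \<forall>a\<in>carrier (G\<lparr>carrier := P\<rparr>). ?f a z = z} mod p"
  proof (rule fixed_point_mod[where H="G\<lparr>carrier := P\<rparr>" and n=na])
    show "group (G\<lparr>carrier := P\<rparr>)" by (rule GP.is_group)
    show "finite (carrier (G\<lparr>carrier := P\<rparr>))" using finite_subset[OF PG fin] by simp
    show "card (carrier (G\<lparr>carrier := P\<rparr>)) = p ^ na" using cP by simp
    show "Factorial_Ring.prime p" by (rule pp)
    show "finite ?S" by (rule finS)
  next
    fix a z assume a: "a \<in> carrier (G\<lparr>carrier := P\<rparr>)" and z: "z \<in> ?S"
    have aP: "a \<in> P" using a by simp
    obtain k where k: "k \<in> K" "z = k \<otimes> y" using z unfolding r_coset_def by auto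
    have c: "a \<in> carrier G" "k \<in> carrier G" using aP k PG KG by auto
    have gen: "y \<otimes> a \<otimes> inv y \<otimes> inv a \<in> K" using SgK y aP unfolding Sg_def by blast
    have e: "a \<otimes> z \<otimes> inv a = ((a \<otimes> k \<otimes> inv a) \<otimes> inv (y \<otimes> a \<otimes> inv y \<otimes> inv a)) \<otimes> y"
      using k(2) c yc by (simp add: m_assoc inv_mult_group)
    have "a \<otimes> k \<otimes> inv a \<in> K" using norm_D[OF fin K _ k(1)] PNK aP by auto
    then have "(a \<otimes> k \<otimes> inv a) \<otimes> inv (y \<otimes> a \<otimes> inv y \<otimes> inv a) \<in> K"
      using subgroup.m_closed[OF K _ subgroup.m_inv_closed[OF K gen]] by blast
    then show "?f a z \<in> ?S" unfolding e using rcosI[OF _ KG yc] by blast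
  next
    fix z assume "z \<in> ?S"
    then have "z \<in> carrier G" using r_coset_subset_G[OF KG yc] by blast
    then show "?f \<one>\<^bsub>G\<lparr>carrier := P\<rparr>\<^esub> z = z" by simp
  next
    fix a b z assume a: "a \<in> carrier (G\<lparr>carrier := P\<rparr>)" and b: "b \<in> carrier (G\<lparr>carrier := P\<rparr>)" and z: "z \<in> ?S"
    have c: "a \<in> carrier G" "b \<in> carrier G" "z \<in> carrier G" using a b z PG r_coset_subset_G[OF KG yc] by auto
    show "?f (a \<otimes>\<^bsub>G\<lparr>carrier := P\<rparr>\<^esub> b) z = ?f a (?f b z)" using c by (simp add: m_assoc inv_mult_group)
  qed
  moreover have "q ^ j mod p \<noteq> 0" using ndvd by (simp add: dvd_eq_mod_eq_0)
  ultimately have "card {z \<in> ?S. \<forall>a\<in>P. ?f a z = z} mod p \<noteq> 0" using cS by simp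
  then have "{z \<in> ?S. \<forall>a\<in>P. ?f a z = z} \<noteq> {}" by (metis card.empty mod_0)
  then obtain z where z: "z \<in> ?S" "\<And>a. a \<in> P \<Longrightarrow> a \<otimes> z \<otimes> inv a = z" by blast
  obtain k where k: "k \<in> K" "z = k \<otimes> y" using z(1) unfolding r_coset_def by auto
  have kc: "k \<in> carrier G" using k KG by auto
  have zc: "z \<in> carrier G" using k kc yc by simp
  have zQ1: "z \<in> Q1" using k subgroup.m_closed[OF Q1 _ y] KQ1 by auto
  have "z \<otimes> a = a \<otimes> z" if a: "a \<in> P" for a
  proof -
    have ac: "a \<in> carrier G" using a PG by auto
    have "z \<otimes> a = (a \<otimes> z \<otimes> inv a) \<otimes> a" using z(2)[OF a] by simp
    also have "\<dots> = a \<otimes> z" using ac zc by (simp add: m_assoc)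
    finally show ?thesis .
  qed
  then have zC: "z \<in> CQ1" unfolding CQ1_def centralizer_in_def using zQ1 by auto
  have "y = inv k \<otimes> z" using k(2) kc yc by simp
  then show "y \<in> K <#> CQ1" using set_multI[OF subgroup.m_inv_closed[OF K k(1)] zC] by simp
qed

lemma CQ1_NQ: "CQ1 \<subseteq> NQ"
proof
  fix c assume c: "c \<in> CQ1"
  then have cQ1: "c \<in> Q1" and cc: "\<And>a. a \<in> P \<Longrightarrow> c \<otimes> a = a \<otimes> c" unfolding CQ1_def centralizer_in_def by auto
  have cG: "c \<in> carrier G" using cQ1 Q1G by auto
  have "c \<in> normalizer G P"
  proof (rule norm_I[OF fin P cG])
    fix a assume a: "a \<in> P"
    have ac: "a \<in> carrier G" using a PG by auto
    have "c \<otimes> a \<otimes> inv c = a \<otimes> c \<otimes> inv c" using cc[OF a] by simp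
    also have "\<dots> = a" using ac cG by (simp add: m_assoc)
    finally show "c \<otimes> a \<otimes> inv c \<in> P" using a by simp
  qed
  then show "c \<in> NQ" using cQ1 Q1Q NQ_def by auto
qed

end


context L53 begin

lemma Q_decomp1: "Q \<subseteq> Q1 <#> NQ"
proof
  fix x assume x: "x \<in> Q"
  have xc: "x \<in> carrier G" using x QG by auto
  have xN: "x \<in> normalizer G Q1P" using QN x Q1P_def by auto
  have ixN: "inv x \<in> normalizer G Q1P" by (rule subgroup.m_inv_closed[OF norm_sub[OF Q1P] xN])
  define B where "B = (\<lambda>a. inv x \<otimes> a \<otimes> x) ` P"
  have B: "subgroup B G" unfolding B_def by (rule conj_subgroup[OF P xc])
  have cB: "card B = p ^ na" unfolding B_def using card_conj[OF P xc] cP by simp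
  have BQ1P: "B \<subseteq> Q1P"
  proof
    fix b assume "b \<in> B"
    then obtain a where a: "a \<in> P" "b = inv x \<otimes> a \<otimes> x" unfolding B_def by auto
    have "inv x \<otimes> a \<otimes> inv (inv x) \<in> Q1P" using norm_D[OF fin Q1P ixN] a(1) P_Q1P by auto
    then show "b \<in> Q1P" using a(2) xc by simp
  qed
  let ?X = "(\<lambda>h. P #> h) ` Q1P"
  have cf: "card ?X mod p = card {S \<in> ?X. \<forall>b\<in>B. S #> inv b = S} mod p"
    by (rule coset_fix[OF fin Q1P P P_Q1P B BQ1P cB pp])
  have "card ?X * card P = card Q1P" by (rule card_cosets_mult[OF fin Q1P P P_Q1P])
  also have "\<dots> = card Q1 * card P" unfolding Q1P_def
    using card_mult_disjoint[OF fin Q1 P] PQ1 by (simp add: Int_commute)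
  finally have "card ?X = card Q1" using cP prime_gt_0_nat[OF pp] by simp
  then have cX: "card ?X = q ^ nc" using cQ1 by simp
  have ndvd: "\<not> p dvd q ^ nc"
  proof
    assume "p dvd q ^ nc"
    then have "p dvd q" using prime_dvd_power[OF pp] by blast
    then show False using primes_dvd_imp_eq[OF pp qp] pq by blast
  qed
  have "q ^ nc mod p \<noteq> 0" using ndvd by (simp add: dvd_eq_mod_eq_0)
  then have "card {S \<in> ?X. \<forall>b\<in>B. S #> inv b = S} mod p \<noteq> 0" using cf cX by simp
  then have "{S \<in> ?X. \<forall>b\<in>B. S #> inv b = S} \<noteq> {}" by (metis card.empty mod_0)
  then obtain S where S: "S \<in> ?X" "\<And>b. b \<in> B \<Longrightarrow> S #> inv b = S" by blast
  obtain g where g: "g \<in> Q1P" "S = P #> g" using S(1) by blast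
  have gc: "g \<in> carrier G" using g subgroup.subset[OF Q1P] by auto
  define w where "w = g \<otimes> inv x"
  have wc: "w \<in> carrier G" unfolding w_def using gc xc by simp
  have wN: "w \<in> normalizer G P"
  proof (rule norm_I[OF fin P wc])
    fix a assume a: "a \<in> P"
    have ac: "a \<in> carrier G" using a PG by auto
    let ?b = "inv x \<otimes> inv a \<otimes> x"
    have bB: "?b \<in> B" unfolding B_def using subgroup.m_inv_closed[OF P a] by blast
    have ib: "inv ?b = inv x \<otimes> a \<otimes> x" using ac xc by (simp add: m_assoc inv_mult_group)
    have "P #> g #> inv ?b = P #> g" using S(2)[OF bB] g(2) by simp
    then have "P #> (g \<otimes> inv ?b) = P #> g" using coset_mult_assoc[OF PG gc] ac xc by simp
    then have "(g \<otimes> inv ?b) \<otimes> inv g \<in> P" using rcos_eq_D[OF P _ gc] gc ac xc by simp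
    moreover have "(g \<otimes> inv ?b) \<otimes> inv g = w \<otimes> a \<otimes> inv w"
      unfolding ib w_def using gc ac xc by (simp add: m_assoc inv_mult_group)
    ultimately show "w \<otimes> a \<otimes> inv w \<in> P" by simp
  qed
  obtain a0 y where ay: "a0 \<in> P" "y \<in> Q1" "g = a0 \<otimes> y" using g(1) unfolding Q1P_comm by (rule set_multE)
  have ac: "a0 \<in> carrier G" "y \<in> carrier G" using ay PG Q1G by auto
  have a0N: "inv a0 \<in> normalizer G P" using self_norm[OF fin P] subgroup.m_inv_closed[OF P ay(1)] by auto
  have "inv a0 \<otimes> w \<in> normalizer G P" by (rule subgroup.m_closed[OF norm_sub[OF P] a0N wN])
  moreover have "inv a0 \<otimes> w = y \<otimes> inv x" unfolding w_def using ay(3) ac xc by (simp add: m_assoc)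
  ultimately have "y \<otimes> inv x \<in> normalizer G P" by simp
  then have "inv (y \<otimes> inv x) \<in> normalizer G P" by (rule subgroup.m_inv_closed[OF norm_sub[OF P]])
  moreover have "inv (y \<otimes> inv x) = x \<otimes> inv y" using ac xc by (simp add: inv_mult_group)
  ultimately have nN: "x \<otimes> inv y \<in> normalizer G P" by simp
  have nQ: "x \<otimes> inv y \<in> Q" using subgroup.m_closed[OF Q x subgroup.m_inv_closed[OF Q]] ay(2) Q1Q by auto
  have nNQ: "x \<otimes> inv y \<in> NQ" using nN nQ NQ_def by simp
  have "(x \<otimes> inv y) \<otimes> y \<otimes> inv (x \<otimes> inv y) \<in> Q1" using norm_D[OF fin Q1 _ ay(2)] QN1 nQ by auto
  moreover have "x = ((x \<otimes> inv y) \<otimes> y \<otimes> inv (x \<otimes> inv y)) \<otimes> (x \<otimes> inv y)"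
    using ac xc by (simp add: m_assoc inv_mult_group)
  ultimately show "x \<in> Q1 <#> NQ" using set_multI[OF _ nNQ] by metis
qed

lemma NQ_Q: "NQ \<subseteq> Q" unfolding NQ_def by blast

lemma Q_eq: "Q = K <#> NQ"
proof
  show "Q \<subseteq> K <#> NQ"
  proof
    fix x assume "x \<in> Q"
    then have "x \<in> Q1 <#> NQ" using Q_decomp1 by blast
    then obtain y n where yn: "y \<in> Q1" "n \<in> NQ" "x = y \<otimes> n" by (rule set_multE)
    have "y \<in> K <#> CQ1" using Q1_decomp yn(1) by blast
    then obtain k c where kc: "k \<in> K" "c \<in> CQ1" "y = k \<otimes> c" by (rule set_multE)
    have cN: "c \<in> NQ" using CQ1_NQ kc(2) by blast
    have cc: "k \<in> carrier G" "c \<in> carrier G" "n \<in> carrier G" using kc yn KG NQ_Q QG cN by auto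
    have "x = k \<otimes> (c \<otimes> n)" using yn(3) kc(3) cc by (simp add: m_assoc)
    moreover have "c \<otimes> n \<in> NQ" by (rule subgroup.m_closed[OF NQ cN yn(2)])
    ultimately show "x \<in> K <#> NQ" using set_multI[OF kc(1)] by simp
  qed
  show "K <#> NQ \<subseteq> Q"
  proof
    fix x assume "x \<in> K <#> NQ"
    then obtain k n where kn: "k \<in> K" "n \<in> NQ" "x = k \<otimes> n" by (rule set_multE)
    have "k \<in> Q" "n \<in> Q" using kn KQ1 Q1Q NQ_Q by auto
    then show "x \<in> Q" using kn(3) subgroup.m_closed[OF Q] by simp
  qed
qed

lemma QNK: "Q \<subseteq> normalizer G K"
proof
  fix x assume "x \<in> Q"
  then have "x \<in> K <#> NQ" using Q_eq by simp
  then obtain k n where kn: "k \<in> K" "n \<in> NQ" "x = k \<otimes> n" by (rule set_multE)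
  have kN: "k \<in> normalizer G K" using self_norm[OF fin K] kn(1) by blast
  have n1: "n \<in> normalizer G Q1" using QN1 NQ_Q kn(2) by blast
  have n2: "n \<in> normalizer G P" using kn(2) NQ_def by simp
  have "n \<in> normalizer G K" by (rule K_norm[OF n1 n2])
  then show "x \<in> normalizer G K" using kn(3) subgroup.m_closed[OF norm_sub[OF K] kN] by simp
qed

lemma K_normal: "K \<lhd> G\<lparr>carrier := QP\<rparr>"
proof (rule normal_sub[OF fin QP K])
  show "K \<subseteq> QP" using KQ1 Q1Q Q_QP by blast
  show "QP \<subseteq> normalizer G K" by (rule QP_norm[OF K QNK PNK])
qed

lemma K_NQ: "K \<inter> NQ = centralizer_in G K P"
proof
  show "K \<inter> NQ \<subseteq> centralizer_in G K P"
  proof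
    fix x assume x: "x \<in> K \<inter> NQ"
    have xK: "x \<in> K" and xN: "x \<in> normalizer G P" using x NQ_def by auto
    have xQ1: "x \<in> Q1" using xK KQ1 by blast
    have xc: "x \<in> carrier G" using xK KG by blast
    have "x \<otimes> a = a \<otimes> x" if a: "a \<in> P" for a
    proof -
      have ac: "a \<in> carrier G" using a PG by blast
      let ?w = "x \<otimes> a \<otimes> inv x \<otimes> inv a"
      have "x \<otimes> a \<otimes> inv x \<in> P" by (rule norm_D[OF fin P xN a])
      then have wP: "?w \<in> P" using subgroup.m_closed[OF P _ subgroup.m_inv_closed[OF P a]] by blast
      have "a \<otimes> inv x \<otimes> inv a \<in> Q1" using norm_D[OF fin Q1 _ subgroup.m_inv_closed[OF Q1 xQ1]] PN a by blast
      then have "x \<otimes> (a \<otimes> inv x \<otimes> inv a) \<in> Q1" by (rule subgroup.m_closed[OF Q1 xQ1])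
      then have wQ: "?w \<in> Q1" using xc ac by (simp add: m_assoc)
      have w1: "?w = \<one>" using wP wQ PQ1 by blast
      have "x \<otimes> a = ?w \<otimes> (a \<otimes> x)" using xc ac by (simp add: m_assoc)
      then show ?thesis using w1 xc ac by simp
    qed
    then show "x \<in> centralizer_in G K P" unfolding centralizer_in_def using xK by blast
  qed
  show "centralizer_in G K P \<subseteq> K \<inter> NQ"
  proof
    fix x assume x: "x \<in> centralizer_in G K P"
    then have "x \<in> CQ1" unfolding CQ1_def centralizer_in_def using KQ1 by blast
    then have "x \<in> NQ" using CQ1_NQ by blast
    then show "x \<in> K \<inter> NQ" using x unfolding centralizer_in_def by blast
  qed
qed

end


context L53 begin

lemma K_gen2: "K \<subseteq> generate G {k \<otimes> a \<otimes> inv k \<otimes> inv a | k a. k \<in> K \<and> a \<in> P}"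
proof -
  let ?S = "{k \<otimes> a \<otimes> inv k \<otimes> inv a | k a. k \<in> K \<and> a \<in> P}"
  have SG: "?S \<subseteq> carrier G"
  proof
    fix s assume "s \<in> ?S"
    then obtain k a where ka: "k \<in> K" "a \<in> P" "s = k \<otimes> a \<otimes> inv k \<otimes> inv a" by blast
    have "k \<in> carrier G" "a \<in> carrier G" using ka KG PG by auto
    then show "s \<in> carrier G" using ka(3) by simp
  qed
  have "Sg \<subseteq> generate G ?S"
  proof
    fix s assume "s \<in> Sg"
    then obtain y a where ya: "y \<in> Q1" "a \<in> P" "s = y \<otimes> a \<otimes> inv y \<otimes> inv a" unfolding Sg_def by auto
    have "y \<in> K <#> CQ1" using Q1_decomp ya(1) by blast
    then obtain k c where kc: "k \<in> K" "c \<in> CQ1" "y = k \<otimes> c" by (rule set_multE)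
    have ca: "c \<otimes> a = a \<otimes> c" using kc(2) ya(2) unfolding CQ1_def centralizer_in_def by blast
    have "c \<in> Q1" using kc(2) unfolding CQ1_def centralizer_in_def by blast
    then have cc: "k \<in> carrier G" "c \<in> carrier G" "a \<in> carrier G"
      using kc(1) KG ya(2) PG Q1G by auto
    have "s = k \<otimes> (c \<otimes> a) \<otimes> inv c \<otimes> inv k \<otimes> inv a" using ya(3) kc(3) cc by (simp add: m_assoc inv_mult_group)
    also have "\<dots> = k \<otimes> (a \<otimes> c) \<otimes> inv c \<otimes> inv k \<otimes> inv a" using ca by simp
    also have "\<dots> = k \<otimes> a \<otimes> inv k \<otimes> inv a" using cc by (simp add: m_assoc)
    finally have "s \<in> ?S" using kc(1) ya(2) by blast
    then show "s \<in> generate G ?S" by (rule generate.incl)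
  qed
  then have "generate G Sg \<subseteq> generate G ?S" by (rule generate_subgroup_incl[OF _ generate_is_subgroup[OF SG]])
  then show ?thesis using K_gen by simp
qed

lemma frat: "centralizer_in G K P \<subseteq> frattini G K"
proof
  fix c assume c: "c \<in> centralizer_in G K P"
  have cK: "c \<in> K" and cc: "\<And>a. a \<in> P \<Longrightarrow> c \<otimes> a = a \<otimes> c" using c unfolding centralizer_in_def by auto
  obtain m where cardK: "card K = q ^ m" using sub_pgroup[OF fin K Q1 KQ1 qp cQ1] by blast
  have "c \<in> M" if Mx: "maximal_subgroup_of G M K" for M
  proof -
    have M: "subgroup M G" and MK: "M \<subset> K"
      and mx: "\<And>L. subgroup L G \<Longrightarrow> M \<subseteq> L \<Longrightarrow> L \<subseteq> K \<Longrightarrow> L = M \<or> L = K"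
      using Mx unfolding maximal_subgroup_of_def by blast+
    have KNM: "K \<subseteq> normalizer G M" by (rule max_sub_normal[OF fin K cardK qp M MK mx])
    have cm: "x \<otimes> y \<otimes> inv x \<otimes> inv y \<in> M" if "x \<in> K" "y \<in> K" for x y
      by (rule max_sub_comm[OF fin K M MK KNM mx that])
    have conjK: "a \<otimes> k \<otimes> inv a \<in> K" if "a \<in> P" "k \<in> K" for a k
      using norm_D[OF fin K _ that(2)] PNK that(1) by blast
    define N where "N = {x \<in> K. \<forall>a\<in>P. a \<otimes> x \<otimes> inv a \<in> M}"
    have NK: "N \<subseteq> K" unfolding N_def by blast
    have N: "subgroup N G"
    proof
      show "N \<subseteq> carrier G" using NK KG by blast
      have "\<forall>a\<in>P. a \<otimes> \<one> \<otimes> inv a \<in> M" using PG subgroup.one_closed[OF M] by auto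
      then show "\<one> \<in> N" unfolding N_def using subgroup.one_closed[OF K] by blast
    next
      fix x y assume x: "x \<in> N" and y: "y \<in> N"
      have xc: "x \<in> carrier G" "y \<in> carrier G" using x y NK KG by auto
      have "a \<otimes> (x \<otimes> y) \<otimes> inv a \<in> M" if a: "a \<in> P" for a
      proof -
        have ac: "a \<in> carrier G" using a PG by blast
        have "(a \<otimes> x \<otimes> inv a) \<otimes> (a \<otimes> y \<otimes> inv a) \<in> M"
          using subgroup.m_closed[OF M] x y a unfolding N_def by blast
        then show ?thesis using ac xc by (simp add: m_assoc)
      qed
      then show "x \<otimes> y \<in> N" unfolding N_def using subgroup.m_closed[OF K] x y NK by blast
    next
      fix x assume x: "x \<in> N"
      have xc: "x \<in> carrier G" using x NK KG by auto
      have "a \<otimes> inv x \<otimes> inv a \<in> M" if a: "a \<in> P" for a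
      proof -
        have ac: "a \<in> carrier G" using a PG by blast
        have "inv (a \<otimes> x \<otimes> inv a) \<in> M"
          using subgroup.m_inv_closed[OF M] x a unfolding N_def by blast
        then show ?thesis using ac xc by (simp add: m_assoc inv_mult_group)
      qed
      then show "inv x \<in> N" unfolding N_def using subgroup.m_inv_closed[OF K] x NK by blast
    qed
    have Nn: "k \<otimes> x \<otimes> inv k \<in> N" if k: "k \<in> K" and x: "x \<in> N" for k x
    proof -
      have xK: "x \<in> K" using x NK by blast
      have c2: "k \<in> carrier G" "x \<in> carrier G" using k xK KG by auto
      have "k \<otimes> x \<otimes> inv k \<in> K" using subgroup.m_closed[OF K subgroup.m_closed[OF K k xK] subgroup.m_inv_closed[OF K k]] .
      moreover have "a \<otimes> (k \<otimes> x \<otimes> inv k) \<otimes> inv a \<in> M" if a: "a \<in> P" for a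
      proof -
        have ac: "a \<in> carrier G" using a PG by blast
        have akK: "a \<otimes> k \<otimes> inv a \<in> K" using conjK[OF a k] .
        have "a \<otimes> x \<otimes> inv a \<in> M" using x a unfolding N_def by blast
        then have "(a \<otimes> k \<otimes> inv a) \<otimes> (a \<otimes> x \<otimes> inv a) \<otimes> inv (a \<otimes> k \<otimes> inv a) \<in> M"
          using norm_D[OF fin M _ ] KNM akK by blast
        then show ?thesis using ac c2 by (simp add: m_assoc inv_mult_group)
      qed
      ultimately show ?thesis unfolding N_def by blast
    qed
    have NP: "b \<otimes> x \<otimes> inv b \<in> N" if b: "b \<in> P" and x: "x \<in> N" for b x
    proof -
      have xK: "x \<in> K" using x NK by blast
      have c2: "b \<in> carrier G" "x \<in> carrier G" using b xK KG PG by auto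
      have "b \<otimes> x \<otimes> inv b \<in> K" using conjK[OF b xK] .
      moreover have "a \<otimes> (b \<otimes> x \<otimes> inv b) \<otimes> inv a \<in> M" if a: "a \<in> P" for a
      proof -
        have ac: "a \<in> carrier G" using a PG by blast
        have "a \<otimes> b \<in> P" using subgroup.m_closed[OF P a b] .
        then have "(a \<otimes> b) \<otimes> x \<otimes> inv (a \<otimes> b) \<in> M" using x unfolding N_def by blast
        then show ?thesis using ac c2 by (simp add: m_assoc inv_mult_group)
      qed
      ultimately show ?thesis unfolding N_def by blast
    qed
    have comm: "x \<otimes> y \<otimes> inv x \<otimes> inv y \<in> N" if x: "x \<in> K" and y: "y \<in> K" for x y
    proof -
      have c2: "x \<in> carrier G" "y \<in> carrier G" using x y KG by auto
      have "x \<otimes> y \<otimes> inv x \<otimes> inv y \<in> K"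
        using subgroup.m_closed[OF K subgroup.m_closed[OF K subgroup.m_closed[OF K x y] subgroup.m_inv_closed[OF K x]] subgroup.m_inv_closed[OF K y]] .
      moreover have "a \<otimes> (x \<otimes> y \<otimes> inv x \<otimes> inv y) \<otimes> inv a \<in> M" if a: "a \<in> P" for a
      proof -
        have ac: "a \<in> carrier G" using a PG by blast
        have "(a \<otimes> x \<otimes> inv a) \<otimes> (a \<otimes> y \<otimes> inv a) \<otimes> inv (a \<otimes> x \<otimes> inv a) \<otimes> inv (a \<otimes> y \<otimes> inv a) \<in> M"
          by (rule cm[OF conjK[OF a x] conjK[OF a y]])
        then show ?thesis using ac c2 by (simp add: m_assoc inv_mult_group)
      qed
      ultimately show ?thesis unfolding N_def by blast
    qed
    have "c \<in> N" by (rule coprime_cent_in[OF fin K cardK P cP pp qp pq PNK N NK Nn NP comm K_gen2 cK cc])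
    then have "\<one> \<otimes> c \<otimes> inv \<one> \<in> M" unfolding N_def using subgroup.one_closed[OF P] by blast
    then show "c \<in> M" using cK KG by auto
  qed
  then show "c \<in> frattini G K" unfolding frattini_def using cK by blast
qed

end

theorem lemma5p3:
  fixes G (structure) and p q :: nat and P Q Q1 :: "'a set"
  assumes "group G" and "finite (carrier G)"
    and "Factorial_Ring.prime p" and "Factorial_Ring.prime q" and "odd p" and "odd q" and "p \<noteq> q"
    and "p_subgroup G p P" and "p_subgroup G q Q" and "p_subgroup G q Q1" and "Q1 \<subseteq> Q"
    and "P \<subseteq> normalizer G Q1"
    and "Q \<subseteq> normalizer G (Q1 <#> P)"
  shows "subgroup (Q <#> P) G
    \<and> sylow_subgroup (G\<lparr>carrier := Q <#> P\<rparr>) q Q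
    \<and> sylow_subgroup (G\<lparr>carrier := Q <#> P\<rparr>) p P
    \<and> Q1 <#> P \<lhd> G\<lparr>carrier := Q <#> P\<rparr>
    \<and> Q1 \<lhd> G\<lparr>carrier := Q <#> P\<rparr>
    \<and> Q = commutator_subgroup G Q1 P <#> (Q \<inter> normalizer G P)
    \<and> commutator_subgroup G Q1 P \<lhd> G\<lparr>carrier := Q <#> P\<rparr>
    \<and> commutator_subgroup G Q1 P \<inter> (Q \<inter> normalizer G P)
           = centralizer_in G (commutator_subgroup G Q1 P) P
    \<and> centralizer_in G (commutator_subgroup G Q1 P) P
           \<subseteq> frattini G (commutator_subgroup G Q1 P)"
proof -
  obtain na where na: "card P = p ^ na" using assms(8) unfolding p_subgroup_def by blast
  obtain nb where nb: "card Q = q ^ nb" using assms(9) unfolding p_subgroup_def by blast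
  obtain nc where nc: "card Q1 = q ^ nc" using assms(10) unfolding p_subgroup_def by blast
  interpret L: L53 G p q P Q Q1 na nb nc
  proof (rule L53.intro[OF assms(1)], unfold L53_axioms_def, intro conjI)
  qed (use assms na nb nc in \<open>auto simp: p_subgroup_def\<close>)
  show ?thesis
    using L.QP L.sylow_Q L.sylow_P L.Q1P_normal L.Q1_normal L.Q_eq L.K_normal L.K_NQ L.frat
    unfolding L.QP_def L.Q1P_def L.K_def L.NQ_def by blast
qed


end
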